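(* Let $p\in(0,1)$ and $1\le m\le n$. Let $\tilde T^p_m$ be the tilted tree on $[m]$ and let $\mathcal Q^p$ be a Binomial pointset of intensity $p$ independent of $\tilde T^p_m$. Then the graph $G^X(\tilde T^p_m,\mathcal Q^p)$ has the same distribution as $G^p_m$.
   Context: Ordered depth-first search ${\bf oDFS}(T)$ for a tree $T$ on $[m]$: set $\mathcal O_0=(1)$ (ordered list), $\mathcal A_0=\emptyset$; for $i=0,\dots,m-1$ let $v_i$ be the first element of $\mathcal O_i$, $\mathcal N_i$ the neighbours of $v_i$ outside $\mathcal A_i\cup\mathcal O_i$, $\mathcal A_{i+1}=\mathcal A_i\cup\{v_i\}$, and $\mathcal O_{i+1}$ obtained by deleting $v_i$ from the front of $\mathcal O_i$ and placing $\mathcal N_i$ in increasing order at the front. Depth-first walk $X(i)=|\mathcal O_i|-1$ ($0\le i<m$), $X(i)=0$ for $i\ge m$; area $a(T)=\sum_{i=1}^{m-1}X(i)$. The tilted tree $\tilde T^p_m$ is a random tree on $[m]$ with $\mathbb P(\tilde T^p_m=T)\propto(1-p)^{-a(T)}$. A Binomial pointset of intensity $p$ is a random subset of $\mathbb Z_{\ge0}\times\mathbb Z_{\ge0}$ containing each point independently with probability $p$. For $S\subset\mathbb R^+\times\mathbb R^+$ and $f:\mathbb R^+\to\mathbb R^+$, $S\cap f:=\{(x,y)\in S:0<y\le f(x)\}$. For a tree $T$ on $[m]$ with depth-first walk $X$ and $\mathcal Q\subset\mathbb Z_{\ge0}^2$, $G^X(T,\mathcal Q)$ is the graph obtained from $T$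 by adding, for each $(i,j)\in\mathcal Q\cap X$, an edge between $v_i$ and the $j$-th vertex of $\mathcal O_i$ counted from the end of the list (i.e. the vertex in position $|\mathcal O_i|-j+1$). $G(n,p)$ is the Erdős–Rényi random graph on $[n]$; $G^p_m$ is the connected component of $G(n,p)$ containing a given vertex, conditioned to have exactly $m$ vertices, relabelled by $[m]$ via the increasing bijection. *)

theory Defs
  imports "HOL-Probability.Probability"
begin

definition pairs :: "nat \<Rightarrow> nat set set" where
  "pairs k = {{a, b} | a b. a \<in> {1..k} \<and> b \<in> {1..k} \<and> a \<noteq> b}"

definition adj_rel :: "nat set set \<Rightarrow> (nat \<times> nat) set" where
  "adj_rel E = {(a, b). {a, b} \<in> E \<and> a \<noteq> b}"

definition comp :: "nat set set \<Rightarrow> nat \<Rightarrow> nat set" where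
  "comp E v = {u. (v, u) \<in> (adj_rel E)\<^sup>*}"

definition is_tree :: "nat \<Rightarrow> nat set set \<Rightarrow> bool" where
  "is_tree m T \<longleftrightarrow> T \<subseteq> pairs m \<and> comp T 1 = {1..m} \<and> card T = m - 1"

definition trees :: "nat \<Rightarrow> nat set set set" where
  "trees m = {T. is_tree m T}"

definition odfs_step :: "nat set set \<Rightarrow> nat list \<times> nat set \<Rightarrow> nat list \<times> nat set" where
  "odfs_step T st = (let Ol = fst st; A = snd st; v = hd Ol;
      N = sorted_list_of_set ({u. {v, u} \<in> T \<and> u \<noteq> v} - A - set Ol)
    in (N @ tl Ol, insert v A))"

definition odfs :: "nat set set \<Rightarrow> nat \<Rightarrow> nat list \<times> nat set" where
  "odfs T i = (odfs_step T ^^ i) ([1], {})"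

definition dfsO :: "nat set set \<Rightarrow> nat \<Rightarrow> nat list" where
  "dfsO T i = fst (odfs T i)"

definition dfs_v :: "nat set set \<Rightarrow> nat \<Rightarrow> nat" where
  "dfs_v T i = hd (dfsO T i)"

definition dfs_walk :: "nat \<Rightarrow> nat set set \<Rightarrow> nat \<Rightarrow> nat" where
  "dfs_walk m T i = (if i < m then length (dfsO T i) - 1 else 0)"

definition area :: "nat \<Rightarrow> nat set set \<Rightarrow> nat" where
  "area m T = (\<Sum>i = 1..m - 1. dfs_walk m T i)"

text \<open>G^X(T,Q): add an edge between v_i and the j-th vertex of O_i counted from the
  end (position |O_i| - j + 1, i.e. 0-based index |O_i| - j) for each (i,j) in Q cap X.\<close>
definition GX :: "nat \<Rightarrow> nat set set \<Rightarrow> (nat \<times> nat) set \<Rightarrow> nat set set" where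
  "GX m T Q = T \<union> {{dfs_v T i, dfsO T i ! (length (dfsO T i) - j)} | i j.
       (i, j) \<in> Q \<and> 0 < j \<and> j \<le> dfs_walk m T i}"

definition tilt_weight :: "real \<Rightarrow> nat \<Rightarrow> nat set set \<Rightarrow> real" where
  "tilt_weight p m T = (1 - p) powi (- int (area m T))"

definition tilt_prob :: "real \<Rightarrow> nat \<Rightarrow> nat set set \<Rightarrow> real" where
  "tilt_prob p m T = tilt_weight p m T / (\<Sum>T'\<in>trees m. tilt_weight p m T')"

section \<open>Binomial pointset on Z>=0 x Z>=0 (a point is present iff its coordinate is True)\<close>

definition binom_pointset :: "real \<Rightarrow> (nat \<times> nat \<Rightarrow> bool) measure" where
  "binom_pointset p = PiM UNIV (\<lambda>_. measure_pmf (bernoulli_pmf p))"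

definition gnp :: "nat \<Rightarrow> real \<Rightarrow> nat set set pmf" where
  "gnp n p = map_pmf (\<lambda>\<omega>. {e \<in> pairs n. \<omega> e}) (Pi_pmf (pairs n) False (\<lambda>_. bernoulli_pmf p))"

definition rank :: "nat set \<Rightarrow> nat \<Rightarrow> nat" where
  "rank C x = card {y \<in> C. y \<le> x}"

definition comp_relabel :: "nat set set \<Rightarrow> nat \<Rightarrow> nat set set" where
  "comp_relabel E v = (\<lambda>e. rank (comp E v) ` e) ` {e \<in> E. e \<subseteq> comp E v}"

definition Gpm :: "nat \<Rightarrow> real \<Rightarrow> nat \<Rightarrow> nat \<Rightarrow> nat set set pmf" where
  "Gpm n p m v = map_pmf (\<lambda>E. comp_relabel E v)
      (cond_pmf (gnp n p) {E. card (comp E v) = m})"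

end

theory Submission
  imports Defs
begin



definition Nbr :: "nat set set \<Rightarrow> nat \<Rightarrow> nat set" where
  "Nbr E x = {u. {x, u} \<in> E \<and> u \<noteq> x}"

abbreviation AA :: "nat set set \<Rightarrow> nat \<Rightarrow> nat set" where
  "AA E i \<equiv> snd (odfs E i)"

definition Nset :: "nat set set \<Rightarrow> nat \<Rightarrow> nat set" where
  "Nset E i = Nbr E (dfs_v E i) - AA E i - set (dfsO E i)"

lemma odfs_0: "dfsO E 0 = [1]" "AA E 0 = {}"
  by (simp_all add: dfsO_def odfs_def)

lemma odfs_Suc: "odfs E (Suc i) =
   (sorted_list_of_set (Nset E i) @ tl (dfsO E i), insert (dfs_v E i) (AA E i))"
  by (simp add: odfs_def odfs_step_def Let_def Nset_def Nbr_def dfs_v_def dfsO_def)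

lemma dfsO_Suc: "dfsO E (Suc i) = sorted_list_of_set (Nset E i) @ tl (dfsO E i)"
  and AA_Suc: "AA E (Suc i) = insert (dfs_v E i) (AA E i)"
  by (simp_all add: dfsO_def odfs_Suc)

lemma pairs_mem: assumes "{a, b} \<in> pairs k" shows "a \<in> {1..k} \<and> b \<in> {1..k} \<and> a \<noteq> b"
proof -
  obtain c d where cd: "{a,b} = {c,d}" "c \<in> {1..k}" "d \<in> {1..k}" "c \<noteq> d"
    using assms unfolding pairs_def by blast
  from cd(1) have "(a = c \<and> b = d) \<or> (a = d \<and> b = c)" by (simp add: doubleton_eq_iff)
  then show ?thesis using cd(2-4) by blast
qed

lemma pairs_memI: "a \<in> {1..k} \<Longrightarrow> b \<in> {1..k} \<Longrightarrow> a \<noteq> b \<Longrightarrow> {a, b} \<in> pairs k"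
  unfolding pairs_def by auto

lemma pairs_finite: "finite (pairs k)"
proof -
  have "pairs k \<subseteq> Pow {1..k}" unfolding pairs_def by auto
  then show ?thesis by (rule finite_subset) simp
qed

lemma pairs_card2: "e \<in> pairs k \<Longrightarrow> \<exists>a b. e = {a,b} \<and> a \<in> {1..k} \<and> b \<in> {1..k} \<and> a \<noteq> b"
  unfolding pairs_def by auto

lemma Nbr_sub: assumes "E \<subseteq> pairs m" shows "Nbr E x \<subseteq> {1..m}"
proof
  fix u assume "u \<in> Nbr E x"
  then have "{x, u} \<in> pairs m" using assms unfolding Nbr_def by auto
  then show "u \<in> {1..m}" using pairs_mem[of x u m] by simp
qed

lemma Nbr_finite: "E \<subseteq> pairs m \<Longrightarrow> finite (Nbr E x)"
  by (rule finite_subset[OF Nbr_sub]) simp_all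

lemma Nset_finite: "E \<subseteq> pairs m \<Longrightarrow> finite (Nset E i)"
  unfolding Nset_def by (intro finite_Diff Nbr_finite)

lemma comp_step: assumes "v \<in> comp E a" "u \<in> Nbr E v" shows "u \<in> comp E a"
proof -
  have "(v, u) \<in> adj_rel E" using assms(2) unfolding Nbr_def adj_rel_def by auto
  moreover from assms(1) have "(a, v) \<in> (adj_rel E)\<^sup>*" unfolding comp_def by simp
  ultimately have "(a, u) \<in> (adj_rel E)\<^sup>*" by (rule rtrancl_into_rtrancl[rotated])
  then show ?thesis unfolding comp_def by simp
qed

lemma comp_self: "a \<in> comp E a"
  unfolding comp_def by simp

lemma comp_sub: assumes "E \<subseteq> pairs m" "1 \<le> m" shows "comp E 1 \<subseteq> {1..m}"
proof
  fix u assume "u \<in> comp E 1"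
  then have "(1, u) \<in> (adj_rel E)\<^sup>*" by (simp add: comp_def)
  then show "u \<in> {1..m}"
  proof (induction rule: rtrancl_induct)
    case base then show ?case using assms by simp
  next
    case (step y z)
    then have "{y, z} \<in> pairs m" using assms unfolding adj_rel_def by auto
    then show ?case using pairs_mem[of y z m] by simp
  qed
qed

definition dinv :: "nat set set \<Rightarrow> nat \<Rightarrow> bool" where
  "dinv E i \<longleftrightarrow> distinct (dfsO E i) \<and> set (dfsO E i) \<inter> AA E i = {}
     \<and> AA E i = dfs_v E ` {..<i} \<and> AA E i \<union> set (dfsO E i) \<subseteq> comp E 1
     \<and> (\<forall>a\<in>AA E i. Nbr E a \<subseteq> AA E i \<union> set (dfsO E i))
     \<and> 1 \<in> AA E i \<union> set (dfsO E i)
     \<and> card (AA E i \<union> set (dfsO E i)) = 1 + (\<Sum>k<i. card (Nset E k))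
     \<and> card (AA E i) = i"

lemma dinvD1: "dinv E i \<Longrightarrow> distinct (dfsO E i)"
  unfolding dinv_def by (elim conjE)

lemma dinvD2: "dinv E i \<Longrightarrow> set (dfsO E i) \<inter> AA E i = {}"
  unfolding dinv_def by (elim conjE)

lemma dinvD3: "dinv E i \<Longrightarrow> AA E i = dfs_v E ` {..<i}"
  unfolding dinv_def by (elim conjE)

lemma dinvD4: "dinv E i \<Longrightarrow> AA E i \<union> set (dfsO E i) \<subseteq> comp E 1"
  unfolding dinv_def by (elim conjE)

lemma dinvD5: "dinv E i \<Longrightarrow> \<forall>a\<in>AA E i. Nbr E a \<subseteq> AA E i \<union> set (dfsO E i)"
  unfolding dinv_def by (elim conjE)

lemma dinvD6: "dinv E i \<Longrightarrow> 1 \<in> AA E i \<union> set (dfsO E i)"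
  unfolding dinv_def by (elim conjE)

lemma dinvD7: "dinv E i \<Longrightarrow> card (AA E i \<union> set (dfsO E i)) = 1 + (\<Sum>k<i. card (Nset E k))"
  unfolding dinv_def by (elim conjE)

lemma dinvD8: "dinv E i \<Longrightarrow> card (AA E i) = i"
  unfolding dinv_def by (elim conjE)

lemmas dinvD = dinvD1 dinvD2 dinvD3 dinvD4 dinvD5 dinvD6 dinvD7 dinvD8

lemma dinv_0: "dinv E 0"
  by (simp add: dinv_def odfs_0 comp_self)

lemma dinv_Suc:
  assumes E: "E \<subseteq> pairs m" and I: "dinv E i" and ne: "dfsO E i \<noteq> []"
  shows "dinv E (Suc i)"
proof -
  let ?O = "dfsO E i" and ?A = "AA E i" and ?v = "dfs_v E i" and ?N = "Nset E i"
  have fN: "finite ?N" using Nset_finite[OF E] .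
  have hv: "?v = hd ?O" by (simp add: dfs_v_def)
  have Oeq: "set ?O = insert ?v (set (tl ?O))" using ne hv by (cases ?O) auto
  have I1: "distinct ?O" and I2: "set ?O \<inter> ?A = {}" and I3: "?A = dfs_v E ` {..<i}"
    and I4: "?A \<union> set ?O \<subseteq> comp E 1" and I5: "\<forall>a\<in>?A. Nbr E a \<subseteq> ?A \<union> set ?O"
    and I6: "1 \<in> ?A \<union> set ?O" and I7: "card (?A \<union> set ?O) = 1 + (\<Sum>k<i. card (Nset E k))"
    and I8: "card ?A = i"
    using dinvD[OF I] by -
  have vA: "?v \<notin> ?A" using I2 Oeq by blast
  have vtl: "?v \<notin> set (tl ?O)" using I1 ne hv by (cases ?O) auto
  have tlsub: "set (tl ?O) \<subseteq> set ?O" by (cases ?O) auto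
  have NA: "?N \<inter> (?A \<union> set ?O) = {}" unfolding Nset_def by blast
  have Nsub: "?N \<subseteq> Nbr E ?v" unfolding Nset_def by blast
  have vcomp: "?v \<in> comp E 1" using I4 Oeq by blast
  have fA: "finite ?A" using I3 by simp
  have un: "AA E (Suc i) \<union> set (dfsO E (Suc i)) = ?N \<union> (?A \<union> set ?O)"
    using Oeq fN by (auto simp: AA_Suc dfsO_Suc)
  have Ncomp: "?N \<subseteq> comp E 1" using Nsub vcomp comp_step by blast
  have fO: "finite (?A \<union> set ?O)" using fA by simp
  show ?thesis unfolding dinv_def
  proof (intro conjI)
    show "distinct (dfsO E (Suc i))"
      using I1 fN NA tlsub unfolding dfsO_Suc by (simp add: distinct_tl) blast
    have "set (dfsO E (Suc i)) = ?N \<union> set (tl ?O)" using fN unfolding dfsO_Suc by simp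
    moreover have "?v \<notin> ?N" using NA Oeq by blast
    ultimately show "set (dfsO E (Suc i)) \<inter> AA E (Suc i) = {}"
      using I2 NA vtl tlsub unfolding AA_Suc by blast
    show "AA E (Suc i) = dfs_v E ` {..<Suc i}"
      using I3 unfolding AA_Suc by (auto simp: lessThan_Suc)
    show "AA E (Suc i) \<union> set (dfsO E (Suc i)) \<subseteq> comp E 1"
      unfolding un using I4 Ncomp by blast
    show "\<forall>a\<in>AA E (Suc i). Nbr E a \<subseteq> AA E (Suc i) \<union> set (dfsO E (Suc i))"
    proof
      fix a assume a: "a \<in> AA E (Suc i)"
      show "Nbr E a \<subseteq> AA E (Suc i) \<union> set (dfsO E (Suc i))"
      proof (cases "a = ?v")
        case True
        have "Nbr E ?v \<subseteq> ?N \<union> (?A \<union> set ?O)" unfolding Nset_def by blast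
        then show ?thesis unfolding un True .
      next
        case False
        then have "a \<in> ?A" using a unfolding AA_Suc by blast
        then show ?thesis unfolding un using I5 by blast
      qed
    qed
    show "1 \<in> AA E (Suc i) \<union> set (dfsO E (Suc i))"
      unfolding un using I6 by blast
    show "card (AA E (Suc i) \<union> set (dfsO E (Suc i))) = 1 + (\<Sum>k<Suc i. card (Nset E k))"
      unfolding un using I7 NA fN fO by (simp add: card_Un_disjoint)
    show "card (AA E (Suc i)) = Suc i"
      using I8 vA fA unfolding AA_Suc by simp
  qed
qed

lemma dinv_upto:
  assumes E: "E \<subseteq> pairs m" shows "(\<forall>k<i. dfsO E k \<noteq> []) \<Longrightarrow> dinv E i"
proof (induction i)
  case 0 show ?case by (rule dinv_0)
next
  case (Suc i)
  then have "dinv E i" by simp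
  moreover have "dfsO E i \<noteq> []" using Suc.prems by simp
  ultimately show ?case by (rule dinv_Suc[OF E])
qed

lemma dfsO_ne:
  assumes E: "E \<subseteq> pairs m" and C: "comp E 1 = {1..m}" and I: "dinv E i" and im: "i < m"
  shows "dfsO E i \<noteq> []"
proof
  assume O: "dfsO E i = []"
  have cl0: "\<forall>a\<in>AA E i. Nbr E a \<subseteq> AA E i \<union> set (dfsO E i)" and one0: "1 \<in> AA E i \<union> set (dfsO E i)"
    using dinvD(5,6)[OF I] by -
  have cl: "\<forall>a\<in>AA E i. Nbr E a \<subseteq> AA E i" and one: "1 \<in> AA E i"
    using cl0 one0 O by simp_all
  have "comp E 1 \<subseteq> AA E i"
  proof
    fix u assume "u \<in> comp E 1"
    then have "(1, u) \<in> (adj_rel E)\<^sup>*" by (simp add: comp_def)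
    then show "u \<in> AA E i"
    proof (induction rule: rtrancl_induct)
      case base then show ?case using one .
    next
      case (step y z)
      then have "z \<in> Nbr E y" unfolding adj_rel_def Nbr_def by auto
      then show ?case using cl step.IH by blast
    qed
  qed
  moreover have Ai: "AA E i = dfs_v E ` {..<i}" and cA: "card (AA E i) = i"
    using dinvD(3,8)[OF I] by -
  ultimately have sub: "{1..m} \<subseteq> AA E i" and fin: "finite (AA E i)" using C by simp_all
  have "card {1..m} \<le> card (AA E i)" by (rule card_mono[OF fin sub])
  then show False using cA im by simp
qed

lemma dinv_all:
  assumes E: "E \<subseteq> pairs m" and C: "comp E 1 = {1..m}" shows "i \<le> m \<Longrightarrow> dinv E i"
proof (induction i)
  case 0 show ?case by (rule dinv_0)
next
  case (Suc i)
  then have I: "dinv E i" and im: "i < m" by simp_all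
  show ?case by (rule dinv_Suc[OF E I dfsO_ne[OF E C I im]])
qed




lemma odfs_eq:
  assumes TH: "T \<subseteq> H"
    and hyp: "\<And>i. i < m \<Longrightarrow> odfs T i = odfs H i \<Longrightarrow>
       Nbr H (dfs_v H i) - AA H i - set (dfsO H i) \<subseteq> Nbr T (dfs_v H i)"
  shows "i \<le> m \<Longrightarrow> odfs T i = odfs H i"
proof (induction i)
  case 0 show ?case by (simp add: odfs_def)
next
  case (Suc i)
  then have im: "i < m" and eq: "odfs T i = odfs H i" by simp_all
  have v: "dfs_v T i = dfs_v H i" and O: "dfsO T i = dfsO H i" and A: "AA T i = AA H i"
    using eq by (simp_all add: dfs_v_def dfsO_def)
  have "Nbr T x \<subseteq> Nbr H x" for x using TH unfolding Nbr_def by blast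
  then have "Nset T i = Nset H i" using hyp[OF im eq] unfolding Nset_def v O A by blast
  then show ?case using v O A by (simp add: odfs_Suc)
qed

lemma odfs_eq_Nset:
  assumes TH: "T \<subseteq> H"
    and hyp: "\<And>i. i < m \<Longrightarrow> odfs T i = odfs H i \<Longrightarrow>
       Nbr H (dfs_v H i) - AA H i - set (dfsO H i) \<subseteq> Nbr T (dfs_v H i)"
    and im: "i < m"
  shows "Nset T i = Nset H i"
proof -
  have eq: "odfs T i = odfs H i" using odfs_eq[OF TH hyp] im by simp
  have v: "dfs_v T i = dfs_v H i" and O: "dfsO T i = dfsO H i" and A: "AA T i = AA H i"
    using eq by (simp_all add: dfs_v_def dfsO_def)
  have "Nbr T x \<subseteq> Nbr H x" for x using TH unfolding Nbr_def by blast
  then show "Nset T i = Nset H i" using hyp[OF im eq] unfolding Nset_def v O A by blast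
qed

definition dtree :: "nat \<Rightarrow> nat set set \<Rightarrow> nat set set" where
  "dtree m E = {{dfs_v E i, u} | i u. i < m \<and> u \<in> Nset E i}"

locale conn =
  fixes E :: "nat set set" and m :: nat
  assumes E: "E \<subseteq> pairs m" and C: "comp E 1 = {1..m}" and m1: "1 \<le> m"
begin

lemma inv: "i \<le> m \<Longrightarrow> dinv E i"
  by (rule dinv_all[OF E C])

lemma ne: "i < m \<Longrightarrow> dfsO E i \<noteq> []"
  using dfsO_ne[OF E C inv] by simp

lemma v_hd: "dfs_v E i = hd (dfsO E i)"
  by (simp add: dfs_v_def)

lemma v_in_O: "i < m \<Longrightarrow> dfs_v E i \<in> set (dfsO E i)"
  using ne v_hd by (simp add: hd_in_set)

lemma v_nth0: "dfs_v E i = dfsO E i ! 0" if "i < m"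
  using ne[OF that] v_hd by (simp add: hd_conv_nth)

lemma AO_sub: "i \<le> m \<Longrightarrow> AA E i \<union> set (dfsO E i) \<subseteq> {1..m}"
  using dinvD4[OF inv] C by simp

lemma A_eq: "i \<le> m \<Longrightarrow> AA E i = dfs_v E ` {..<i}"
  using dinvD3[OF inv] by simp

lemma A_m: "AA E m = {1..m}"
proof -
  have sub: "AA E m \<subseteq> {1..m}" using AO_sub[of m] by simp
  have "card (AA E m) = m" using dinvD8[OF inv[of m]] by simp
  then show ?thesis using sub by (intro card_subset_eq) simp_all
qed

lemma v_range: "dfs_v E ` {..<m} = {1..m}"
  using A_m A_eq[of m] by simp

lemma v_inj: "inj_on (dfs_v E) {..<m}"
proof -
  have "card (dfs_v E ` {..<m}) = card {..<m}" using v_range by simp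
  then show ?thesis by (simp add: inj_on_iff_eq_card)
qed

lemma v_eq_iff: "i < m \<Longrightarrow> k < m \<Longrightarrow> dfs_v E i = dfs_v E k \<longleftrightarrow> i = k"
  using v_inj unfolding inj_on_def by blast

lemma O_m: "dfsO E m = []"
proof -
  have s1: "set (dfsO E m) \<subseteq> {1..m}" using AO_sub[of m] by simp
  have s2: "set (dfsO E m) \<inter> {1..m} = {}" using dinvD2[OF inv[of m]] A_m by simp
  have "set (dfsO E m) = {}" using Int_absorb2[OF s1] s2 by simp
  then show ?thesis by simp
qed

lemma sumN: "(\<Sum>k<m. card (Nset E k)) = m - 1"
proof -
  have "card (AA E m \<union> set (dfsO E m)) = 1 + (\<Sum>k<m. card (Nset E k))"
    using dinvD7[OF inv[of m]] by simp
  then show ?thesis using A_m O_m by simp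
qed

lemma later:
  assumes im: "i < m" and w: "w \<in> {1..m}" and wA: "w \<notin> AA E i" and wv: "w \<noteq> dfs_v E i"
  shows "\<exists>k. i < k \<and> k < m \<and> w = dfs_v E k"
proof -
  have "w \<in> dfs_v E ` {..<m}" using w v_range by simp
  then obtain k where k0: "k \<in> {..<m}" and kw: "w = dfs_v E k" by (rule imageE)
  have "\<not> k < i"
  proof
    assume "k < i"
    then have "w \<in> dfs_v E ` {..<i}" using kw by simp
    then show False using wA A_eq[of i] im by simp
  qed
  moreover have "k \<noteq> i" using wv kw by auto
  ultimately have "i < k" by simp
  then show ?thesis using k0 kw by auto
qed

lemma Nset_later:
  assumes im: "i < m" and u: "u \<in> Nset E i"
  shows "\<exists>k. i < k \<and> k < m \<and> u = dfs_v E k"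
proof -
  have "u \<in> {1..m}" using u Nbr_sub[OF E] unfolding Nset_def by blast
  moreover have "u \<notin> AA E i" using u unfolding Nset_def by blast
  moreover have "u \<noteq> dfs_v E i" using u v_in_O[OF im] unfolding Nset_def by blast
  ultimately show ?thesis by (rule later[OF im])
qed

lemma tail_later:
  assumes im: "i < m" and idx: "0 < idx" "idx < length (dfsO E i)"
  shows "\<exists>k. i < k \<and> k < m \<and> dfsO E i ! idx = dfs_v E k"
proof -
  let ?w = "dfsO E i ! idx"
  have wO: "?w \<in> set (dfsO E i)" using idx by simp
  have "?w \<in> {1..m}" using wO AO_sub[of i] im by auto
  moreover have "?w \<notin> AA E i" using wO dinvD2[OF inv[of i]] im by auto
  moreover have "?w \<noteq> dfs_v E i"
  proof
    assume "?w = dfs_v E i"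
    then have "dfsO E i ! idx = dfsO E i ! 0" using v_nth0[OF im] by simp
    moreover have dist: "distinct (dfsO E i)" using dinvD1[OF inv[of i]] im by simp
    moreover have l0: "0 < length (dfsO E i)" using idx by linarith
    ultimately have "idx = 0" using nth_eq_iff_index_eq[OF dist idx(2) l0] by simp
    then show False using idx by simp
  qed
  ultimately show ?thesis by (rule later[OF im])
qed

lemma dtree_sub: "dtree m E \<subseteq> E"
proof
  fix e assume "e \<in> dtree m E"
  then obtain i u where "e = {dfs_v E i, u}" "u \<in> Nset E i" unfolding dtree_def by blast
  then show "e \<in> E" unfolding Nset_def Nbr_def by auto
qed

lemma dtree_image: "dtree m E = (\<lambda>(i, u). {dfs_v E i, u}) ` (SIGMA i:{..<m}. Nset E i)"
  unfolding dtree_def by auto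

lemma card_dtree: "card (dtree m E) = m - 1"
proof -
  have inj: "inj_on (\<lambda>(i, u). {dfs_v E i, u}) (SIGMA i:{..<m}. Nset E i)"
  proof (rule inj_onI, clarify)
    fix i u k w
    assume i: "i < m" "u \<in> Nset E i" and k: "k < m" "w \<in> Nset E k"
      and eq: "{dfs_v E i, u} = {dfs_v E k, w}"
    obtain a where a: "i < a" "a < m" "u = dfs_v E a" using Nset_later[OF i] by blast
    obtain b where b: "k < b" "b < m" "w = dfs_v E b" using Nset_later[OF k] by blast
    from eq have "(dfs_v E i = dfs_v E k \<and> u = w) \<or> (dfs_v E i = w \<and> u = dfs_v E k)"
      by (simp add: doubleton_eq_iff)
    then show "i = k \<and> u = w"
    proof
      assume "dfs_v E i = dfs_v E k \<and> u = w"
      then show ?thesis using v_eq_iff[OF i(1) k(1)] by simp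
    next
      assume h: "dfs_v E i = w \<and> u = dfs_v E k"
      then have "i = b" using v_eq_iff[OF i(1) b(2)] b by simp
      moreover have "a = k" using h v_eq_iff[OF a(2) k(1)] a by simp
      ultimately show ?thesis using a b by simp
    qed
  qed
  have fin: "finite (Nset E i)" for i by (rule Nset_finite[OF E])
  have "card (dtree m E) = card (SIGMA i:{..<m}. Nset E i)"
    unfolding dtree_image by (rule card_image[OF inj])
  also have "\<dots> = (\<Sum>i<m. card (Nset E i))" using fin by (simp add: card_SigmaI)
  finally show ?thesis using sumN by simp
qed

lemma finE: "finite E"
  by (rule finite_subset[OF E pairs_finite])

lemma dtree_eq: assumes "card E = m - 1" shows "dtree m E = E"
  using card_subset_eq[OF finE dtree_sub] card_dtree assms by simp

end




definition Sx :: "nat \<Rightarrow> nat set set \<Rightarrow> (nat \<times> nat) set" where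
  "Sx m T = {(i, j). i < m \<and> 0 < j \<and> j \<le> dfs_walk m T i}"

definition phi :: "nat set set \<Rightarrow> nat \<times> nat \<Rightarrow> nat set" where
  "phi T s = {dfs_v T (fst s), dfsO T (fst s) ! (length (dfsO T (fst s)) - snd s)}"

lemma GX_alt: "GX m T Q = T \<union> phi T ` (Q \<inter> Sx m T)"
proof -
  have "{{dfs_v T i, dfsO T i ! (length (dfsO T i) - j)} | i j.
       (i, j) \<in> Q \<and> 0 < j \<and> j \<le> dfs_walk m T i} = phi T ` (Q \<inter> Sx m T)"
  proof (intro equalityI subsetI)
    fix e assume "e \<in> {{dfs_v T i, dfsO T i ! (length (dfsO T i) - j)} | i j.
       (i, j) \<in> Q \<and> 0 < j \<and> j \<le> dfs_walk m T i}"
    then obtain i j where e: "e = {dfs_v T i, dfsO T i ! (length (dfsO T i) - j)}"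
      and ij: "(i, j) \<in> Q" "0 < j" "j \<le> dfs_walk m T i" by blast
    have "i < m" using ij(2,3) by (cases "i < m") (simp_all add: dfs_walk_def)
    then have "(i, j) \<in> Q \<inter> Sx m T" using ij by (simp add: Sx_def)
    moreover have "e = phi T (i, j)" using e by (simp add: phi_def)
    ultimately show "e \<in> phi T ` (Q \<inter> Sx m T)" by blast
  next
    fix e assume "e \<in> phi T ` (Q \<inter> Sx m T)"
    then obtain i j where ij: "(i, j) \<in> Q" "(i, j) \<in> Sx m T" and e: "e = phi T (i, j)" by auto
    then show "e \<in> {{dfs_v T i, dfsO T i ! (length (dfsO T i) - j)} | i j.
       (i, j) \<in> Q \<and> 0 < j \<and> j \<le> dfs_walk m T i}"
      unfolding phi_def Sx_def by auto
  qed
  then show ?thesis unfolding GX_def by simp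
qed

lemma comp_mono: "E \<subseteq> F \<Longrightarrow> comp E a \<subseteq> comp F a"
proof
  fix u assume EF: "E \<subseteq> F" and "u \<in> comp E a"
  then have "(a, u) \<in> (adj_rel E)\<^sup>*" by (simp add: comp_def)
  moreover have "adj_rel E \<subseteq> adj_rel F" using EF unfolding adj_rel_def by auto
  ultimately have "(a, u) \<in> (adj_rel F)\<^sup>*" using rtrancl_mono by blast
  then show "u \<in> comp F a" by (simp add: comp_def)
qed

context conn begin

lemma Sx_D: assumes "s \<in> Sx m E"
  shows "fst s < m" "0 < snd s" "snd s < length (dfsO E (fst s))"
proof -
  obtain i j where s: "s = (i, j)" by (cases s)
  have ij: "i < m" "0 < j" "j \<le> dfs_walk m E i" using assms s by (simp_all add: Sx_def)
  have "dfsO E i \<noteq> []" using ne[OF ij(1)] .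
  then have "j < length (dfsO E i)" using ij by (simp add: dfs_walk_def)
  then show "fst s < m" "0 < snd s" "snd s < length (dfsO E (fst s))" using ij s by simp_all
qed

lemma phi_later: assumes "s \<in> Sx m E"
  shows "\<exists>k. fst s < k \<and> k < m \<and> dfsO E (fst s) ! (length (dfsO E (fst s)) - snd s) = dfs_v E k"
proof -
  note D = Sx_D[OF assms]
  have "0 < length (dfsO E (fst s)) - snd s" using D by simp
  moreover have "length (dfsO E (fst s)) - snd s < length (dfsO E (fst s))" using D by simp
  ultimately show ?thesis by (rule tail_later[OF D(1)])
qed

lemma phi_inj: "inj_on (phi E) (Sx m E)"
proof (rule inj_onI)
  fix s t assume s: "s \<in> Sx m E" and t: "t \<in> Sx m E" and eq: "phi E s = phi E t"
  obtain i j where sij: "s = (i, j)" by (cases s)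
  obtain i' j' where tij: "t = (i', j')" by (cases t)
  note Ds = Sx_D[OF s] and Dt = Sx_D[OF t]
  obtain k where k: "i < k" "k < m" "dfsO E i ! (length (dfsO E i) - j) = dfs_v E k"
    using phi_later[OF s] sij by auto
  obtain k' where k': "i' < k'" "k' < m" "dfsO E i' ! (length (dfsO E i') - j') = dfs_v E k'"
    using phi_later[OF t] tij by auto
  have im: "i < m" "i' < m" using Ds Dt sij tij by simp_all
  have "{dfs_v E i, dfs_v E k} = {dfs_v E i', dfs_v E k'}"
    using eq k k' sij tij by (simp add: phi_def)
  then have "(dfs_v E i = dfs_v E i' \<and> dfs_v E k = dfs_v E k') \<or> (dfs_v E i = dfs_v E k' \<and> dfs_v E k = dfs_v E i')"
    by (simp add: doubleton_eq_iff)
  then have "i = i' \<and> k = k' \<or> (i = k' \<and> k = i')"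
    using v_eq_iff im k k' by auto
  then have ii: "i = i'" and kk: "k = k'" using k k' by auto
  have dist: "distinct (dfsO E i)" using dinvD1[OF inv[of i]] im by simp
  have "dfsO E i ! (length (dfsO E i) - j) = dfsO E i ! (length (dfsO E i) - j')"
    using k k' ii kk by simp
  moreover have "length (dfsO E i) - j < length (dfsO E i)" "length (dfsO E i) - j' < length (dfsO E i)"
    using Ds Dt sij tij ii by simp_all
  ultimately have "length (dfsO E i) - j = length (dfsO E i) - j'"
    using nth_eq_iff_index_eq[OF dist] by blast
  then have "j = j'" using Ds Dt sij tij ii by simp
  then show "s = t" using sij tij ii by simp
qed

lemma phi_notin: assumes s: "s \<in> Sx m E" shows "phi E s \<notin> dtree m E"
proof
  assume "phi E s \<in> dtree m E"
  then obtain a u where au: "phi E s = {dfs_v E a, u}" "a < m" "u \<in> Nset E a"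
    unfolding dtree_def by blast
  obtain i j where sij: "s = (i, j)" by (cases s)
  note Ds = Sx_D[OF s]
  have im: "i < m" using Ds sij by simp
  obtain k where k: "i < k" "k < m" "dfsO E i ! (length (dfsO E i) - j) = dfs_v E k"
    using phi_later[OF s] sij by auto
  obtain b where b: "a < b" "b < m" "u = dfs_v E b" using Nset_later[OF au(2,3)] by blast
  have "{dfs_v E i, dfs_v E k} = {dfs_v E a, dfs_v E b}" using au(1) k b sij by (simp add: phi_def)
  then have "(dfs_v E i = dfs_v E a \<and> dfs_v E k = dfs_v E b) \<or> (dfs_v E i = dfs_v E b \<and> dfs_v E k = dfs_v E a)"
    by (simp add: doubleton_eq_iff)
  then have c: "(i = a \<and> k = b) \<or> (i = b \<and> k = a)"
    using v_eq_iff im k b au(2) by auto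
  then have ia: "i = a" and kb: "k = b" using k b by auto
  have "u \<in> set (dfsO E i)"
  proof -
    have "length (dfsO E i) - j < length (dfsO E i)" using Ds sij by simp
    then have "dfsO E i ! (length (dfsO E i) - j) \<in> set (dfsO E i)" by simp
    then show ?thesis using k b kb by simp
  qed
  then show False using au(3) ia unfolding Nset_def by blast
qed

lemma phi_pairs: assumes s: "s \<in> Sx m E" shows "phi E s \<in> pairs m"
proof -
  obtain i j where sij: "s = (i, j)" by (cases s)
  note Ds = Sx_D[OF s]
  have im: "i < m" using Ds sij by simp
  obtain k where k: "i < k" "k < m" "dfsO E i ! (length (dfsO E i) - j) = dfs_v E k"
    using phi_later[OF s] sij by auto
  have "phi E s = {dfs_v E i, dfs_v E k}" using k sij by (simp add: phi_def)
  moreover have "dfs_v E i \<in> {1..m}" "dfs_v E k \<in> {1..m}" using v_range im k by auto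
  moreover have "dfs_v E i \<noteq> dfs_v E k" using v_eq_iff[OF im k(2)] k by simp
  ultimately show ?thesis using pairs_memI by simp
qed

lemma Sx_eq: "Sx m E = (SIGMA i:{..<m}. {1..dfs_walk m E i})"
  unfolding Sx_def by auto

lemma Sx_finite: "finite (Sx m E)"
  unfolding Sx_eq by auto

lemma card_Sx: "card (Sx m E) = area m E"
proof -
  have "card (Sx m E) = (\<Sum>i<m. dfs_walk m E i)"
    unfolding Sx_eq by (simp add: card_SigmaI)
  also have "\<dots> = (\<Sum>i\<in>insert 0 {1..m - 1}. dfs_walk m E i)"
  proof -
    have "{..<m} = insert 0 {1..m - 1}" using m1 by auto
    then show ?thesis by simp
  qed
  also have "\<dots> = dfs_walk m E 0 + (\<Sum>i=1..m - 1. dfs_walk m E i)" by simp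
  also have "dfs_walk m E 0 = 0" using m1 by (simp add: dfs_walk_def odfs_0)
  finally show ?thesis by (simp add: area_def)
qed

lemma nbr_GX:
  assumes Q: "Q \<subseteq> Sx m E" and im: "i < m"
  shows "Nbr (E \<union> phi E ` Q) (dfs_v E i) - AA E i - set (dfsO E i) \<subseteq> Nbr E (dfs_v E i)"
proof
  fix u assume u: "u \<in> Nbr (E \<union> phi E ` Q) (dfs_v E i) - AA E i - set (dfsO E i)"
  then have e: "{dfs_v E i, u} \<in> E \<union> phi E ` Q" and uv: "u \<noteq> dfs_v E i"
    and uA: "u \<notin> AA E i" and uO: "u \<notin> set (dfsO E i)"
    unfolding Nbr_def by auto
  show "u \<in> Nbr E (dfs_v E i)"
  proof (cases "{dfs_v E i, u} \<in> E")
    case True then show ?thesis using uv unfolding Nbr_def by simp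
  next
    case False
    then obtain s where s: "s \<in> Q" and es: "{dfs_v E i, u} = phi E s" using e by blast
    have sS: "s \<in> Sx m E" using s Q by blast
    obtain a j where saj: "s = (a, j)" by (cases s)
    note Ds = Sx_D[OF sS]
    have am: "a < m" using Ds saj by simp
    obtain k where k: "a < k" "k < m" "dfsO E a ! (length (dfsO E a) - j) = dfs_v E k"
      using phi_later[OF sS] saj by auto
    have "{dfs_v E i, u} = {dfs_v E a, dfs_v E k}" using es k saj by (simp add: phi_def)
    then have "(dfs_v E i = dfs_v E a \<and> u = dfs_v E k) \<or> (dfs_v E i = dfs_v E k \<and> u = dfs_v E a)"
      by (simp add: doubleton_eq_iff)
    then show ?thesis
    proof
      assume h: "dfs_v E i = dfs_v E a \<and> u = dfs_v E k"
      then have ia: "i = a" using v_eq_iff[OF im am] by simp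
      have "length (dfsO E a) - j < length (dfsO E a)" using Ds saj by simp
      then have "dfsO E a ! (length (dfsO E a) - j) \<in> set (dfsO E a)" by simp
      then have "u \<in> set (dfsO E i)" using h k ia by simp
      then show ?thesis using uO by simp
    next
      assume h: "dfs_v E i = dfs_v E k \<and> u = dfs_v E a"
      then have ik: "i = k" using v_eq_iff[OF im k(2)] by simp
      then have "a < i" using k by simp
      then have "u \<in> AA E i" using h A_eq[of i] im by simp
      then show ?thesis using uA by simp
    qed
  qed
qed

lemma GX_run:
  assumes Q: "Q \<subseteq> Sx m E" and i: "i \<le> m"
  shows "odfs E i = odfs (E \<union> phi E ` Q) i"
proof (rule odfs_eq[OF _ _ i])
  show "E \<subseteq> E \<union> phi E ` Q" by blast
next
  fix k assume k: "k < m" and eq: "odfs E k = odfs (E \<union> phi E ` Q) k"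
  have v: "dfs_v (E \<union> phi E ` Q) k = dfs_v E k" and O: "dfsO (E \<union> phi E ` Q) k = dfsO E k"
    and A: "AA (E \<union> phi E ` Q) k = AA E k"
    using eq by (simp_all add: dfs_v_def dfsO_def)
  show "Nbr (E \<union> phi E ` Q) (dfs_v (E \<union> phi E ` Q) k) - AA (E \<union> phi E ` Q) k
        - set (dfsO (E \<union> phi E ` Q) k) \<subseteq> Nbr E (dfs_v (E \<union> phi E ` Q) k)"
    unfolding v O A by (rule nbr_GX[OF Q k])
qed

lemma GX_Nset:
  assumes Q: "Q \<subseteq> Sx m E" and i: "i < m"
  shows "Nset E i = Nset (E \<union> phi E ` Q) i"
proof (rule odfs_eq_Nset[OF _ _ i])
  show "E \<subseteq> E \<union> phi E ` Q" by blast
next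
  fix k assume k: "k < m" and eq: "odfs E k = odfs (E \<union> phi E ` Q) k"
  have v: "dfs_v (E \<union> phi E ` Q) k = dfs_v E k" and O: "dfsO (E \<union> phi E ` Q) k = dfsO E k"
    and A: "AA (E \<union> phi E ` Q) k = AA E k"
    using eq by (simp_all add: dfs_v_def dfsO_def)
  show "Nbr (E \<union> phi E ` Q) (dfs_v (E \<union> phi E ` Q) k) - AA (E \<union> phi E ` Q) k
        - set (dfsO (E \<union> phi E ` Q) k) \<subseteq> Nbr E (dfs_v (E \<union> phi E ` Q) k)"
    unfolding v O A by (rule nbr_GX[OF Q k])
qed

lemma dtree_GX:
  assumes Q: "Q \<subseteq> Sx m E"
  shows "dtree m (E \<union> phi E ` Q) = dtree m E"
proof -
  have vv: "dfs_v (E \<union> phi E ` Q) i = dfs_v E i" if "i < m" for i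
    using GX_run[OF Q, of i] that by (simp add: dfs_v_def dfsO_def)
  have NN: "Nset (E \<union> phi E ` Q) i = Nset E i" if "i < m" for i
    using GX_Nset[OF Q that] by simp
  show ?thesis
  proof (intro equalityI subsetI)
    fix e assume "e \<in> dtree m (E \<union> phi E ` Q)"
    then obtain i u where e: "e = {dfs_v (E \<union> phi E ` Q) i, u}" "i < m" "u \<in> Nset (E \<union> phi E ` Q) i"
      unfolding dtree_def by blast
    then have "e = {dfs_v E i, u}" "u \<in> Nset E i" using vv NN by simp_all
    then show "e \<in> dtree m E" using e(2) unfolding dtree_def by blast
  next
    fix e assume "e \<in> dtree m E"
    then obtain i u where e: "e = {dfs_v E i, u}" "i < m" "u \<in> Nset E i"
      unfolding dtree_def by blast
    then have "e = {dfs_v (E \<union> phi E ` Q) i, u}" "u \<in> Nset (E \<union> phi E ` Q) i" using vv NN by simp_all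
    then show "e \<in> dtree m (E \<union> phi E ` Q)" using e(2) unfolding dtree_def by blast
  qed
qed

lemma GX_pairs: assumes Q: "Q \<subseteq> Sx m E" shows "E \<union> phi E ` Q \<subseteq> pairs m"
  using E phi_pairs Q by blast

lemma GX_comp: assumes Q: "Q \<subseteq> Sx m E" shows "comp (E \<union> phi E ` Q) 1 = {1..m}"
proof
  show "comp (E \<union> phi E ` Q) 1 \<subseteq> {1..m}" by (rule comp_sub[OF GX_pairs[OF Q] m1])
  show "{1..m} \<subseteq> comp (E \<union> phi E ` Q) 1" using comp_mono[of E "E \<union> phi E ` Q" 1] C by auto
qed

end




definition Conn :: "nat \<Rightarrow> nat set set set" where
  "Conn m = {H. H \<subseteq> pairs m \<and> comp H 1 = {1..m}}"

lemma tree_conn: assumes "T \<in> trees m" "1 \<le> m" shows "conn T m"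
  using assms unfolding trees_def is_tree_def conn_def by simp

lemma tree_card: "T \<in> trees m \<Longrightarrow> card T = m - 1"
  unfolding trees_def is_tree_def by simp

lemma tree_dtree: assumes "T \<in> trees m" "1 \<le> m" shows "dtree m T = T"
  using conn.dtree_eq[OF tree_conn[OF assms] tree_card[OF assms(1)]] .

lemma GX_unique:
  assumes T: "T \<in> trees m" and T': "T' \<in> trees m" and m1: "1 \<le> m"
    and eq: "GX m T Q = GX m T' Q'"
  shows "T = T'"
proof -
  have "dtree m (GX m T Q) = T"
    unfolding GX_alt using conn.dtree_GX[OF tree_conn[OF T m1], of "Q \<inter> Sx m T"] tree_dtree[OF T m1]
    by simp
  moreover have "dtree m (GX m T' Q') = T'"
    unfolding GX_alt using conn.dtree_GX[OF tree_conn[OF T' m1], of "Q' \<inter> Sx m T'"] tree_dtree[OF T' m1]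
    by simp
  ultimately show ?thesis using eq by simp
qed

lemma GX_Conn: assumes T: "T \<in> trees m" and m1: "1 \<le> m" shows "GX m T Q \<in> Conn m"
  unfolding GX_alt Conn_def
  using conn.GX_pairs[OF tree_conn[OF T m1], of "Q \<inter> Sx m T"]
        conn.GX_comp[OF tree_conn[OF T m1], of "Q \<inter> Sx m T"] by simp

context conn begin

abbreviation "D \<equiv> dtree m E"

lemma D_hyp: "k < m \<Longrightarrow> odfs D k = odfs E k \<Longrightarrow>
       Nbr E (dfs_v E k) - AA E k - set (dfsO E k) \<subseteq> Nbr D (dfs_v E k)"
proof
  fix k u assume k: "k < m" and u: "u \<in> Nbr E (dfs_v E k) - AA E k - set (dfsO E k)"
  then have uN: "u \<in> Nset E k" by (simp add: Nset_def)
  then have "{dfs_v E k, u} \<in> D" using k unfolding dtree_def by blast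
  moreover have "u \<noteq> dfs_v E k" using u unfolding Nbr_def by simp
  ultimately show "u \<in> Nbr D (dfs_v E k)" unfolding Nbr_def by simp
qed

lemma D_run: "i \<le> m \<Longrightarrow> odfs D i = odfs E i"
  by (rule odfs_eq[OF dtree_sub D_hyp])

lemma D_v: "i \<le> m \<Longrightarrow> dfs_v D i = dfs_v E i"
  using D_run by (simp add: dfs_v_def dfsO_def)

lemma D_O: "i \<le> m \<Longrightarrow> dfsO D i = dfsO E i"
  using D_run by (simp add: dfsO_def)

lemma D_walk: "dfs_walk m D i = dfs_walk m E i"
  using D_O by (simp add: dfs_walk_def)

lemma D_Sx: "Sx m D = Sx m E"
  unfolding Sx_def D_walk ..

lemma D_phi: "fst s < m \<Longrightarrow> phi D s = phi E s"
  using D_O D_v by (simp add: phi_def)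

lemma D_tree: "D \<in> trees m"
proof -
  have DE: "D \<subseteq> pairs m" using dtree_sub E by blast
  have "dinv D m"
  proof (rule dinv_upto[OF DE])
    show "\<forall>k<m. dfsO D k \<noteq> []" using D_O ne by simp
  qed
  then have "AA D m \<subseteq> comp D 1" using dinvD4 by blast
  moreover have "AA D m = {1..m}" using D_run[of m] A_m by simp
  ultimately have "{1..m} \<subseteq> comp D 1" by simp
  moreover have "comp D 1 \<subseteq> {1..m}" by (rule comp_sub[OF DE m1])
  ultimately have "comp D 1 = {1..m}" by blast
  then show ?thesis using DE card_dtree unfolding trees_def is_tree_def by simp
qed

lemma edge_cover:
  assumes ik: "i < k" "k < m" and e: "{dfs_v E i, dfs_v E k} \<in> E"
  shows "{dfs_v E i, dfs_v E k} \<in> D \<union> phi D ` Sx m D"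
proof -
  have im: "i < m" using ik by simp
  let ?b = "dfs_v E k"
  have bA: "?b \<notin> AA E i"
  proof
    assume "?b \<in> AA E i"
    then obtain l where l: "l < i" "?b = dfs_v E l" using A_eq[of i] im by auto
    then have "k = l" using v_eq_iff[OF ik(2), of l] ik by simp
    then show False using l ik by simp
  qed
  have bv: "?b \<noteq> dfs_v E i" using v_eq_iff[OF im ik(2)] ik by simp
  have bN: "?b \<in> Nbr E (dfs_v E i)" using e bv unfolding Nbr_def by simp
  show ?thesis
  proof (cases "?b \<in> set (dfsO E i)")
    case False
    then have "?b \<in> Nset E i" using bA bN unfolding Nset_def by simp
    then have "{dfs_v E i, ?b} \<in> D" using im unfolding dtree_def by blast
    then show ?thesis by blast
  next
    case True
    then obtain idx where idx: "idx < length (dfsO E i)" "dfsO E i ! idx = ?b"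
      by (auto simp: in_set_conv_nth)
    have "idx \<noteq> 0"
    proof
      assume "idx = 0"
      then have "dfsO E i ! idx = dfs_v E i" using v_nth0[OF im] by simp
      then show False using idx bv by simp
    qed
    define j where "j = length (dfsO E i) - idx"
    have j: "0 < j" "j \<le> length (dfsO E i) - 1" "length (dfsO E i) - j = idx"
      using idx \<open>idx \<noteq> 0\<close> unfolding j_def by auto
    have "(i, j) \<in> Sx m E" using j im by (simp add: Sx_def dfs_walk_def)
    moreover have "phi E (i, j) = {dfs_v E i, ?b}" using j idx by (simp add: phi_def)
    ultimately show ?thesis using D_Sx D_phi[of "(i, j)"] im by force
  qed
qed

lemma decomp: "E = D \<union> phi D ` {s \<in> Sx m D. phi D s \<in> E}"
proof (intro equalityI subsetI)
  fix e assume eE: "e \<in> E"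
  then obtain a b where ab: "e = {a, b}" "a \<in> {1..m}" "b \<in> {1..m}" "a \<noteq> b"
    using E pairs_card2 by blast
  obtain i where i: "i < m" "a = dfs_v E i" using ab(2) v_range by (metis imageE lessThan_iff)
  obtain k where k: "k < m" "b = dfs_v E k" using ab(3) v_range by (metis imageE lessThan_iff)
  have "i \<noteq> k" using i k ab by auto
  then have "e \<in> D \<union> phi D ` Sx m D"
  proof (cases "i < k")
    case True then show ?thesis using edge_cover[of i k] k i ab eE by simp
  next
    case False
    then have "k < i" using \<open>i \<noteq> k\<close> by simp
    moreover have "e = {dfs_v E k, dfs_v E i}" using ab i k by (simp add: insert_commute)
    ultimately show ?thesis using edge_cover[of k i] k i eE by simp
  qed
  then show "e \<in> D \<union> phi D ` {s \<in> Sx m D. phi D s \<in> E}" using eE by blast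
next
  fix e assume "e \<in> D \<union> phi D ` {s \<in> Sx m D. phi D s \<in> E}"
  then show "e \<in> E" using dtree_sub by blast
qed

end




lemma cyl_measure:
  assumes S: "finite S" and p: "0 \<le> p" "p \<le> 1"
  shows "measure (binom_pointset p) {\<omega>. \<forall>s\<in>S. \<omega> s = b s} = (\<Prod>s\<in>S. pmf (bernoulli_pmf p) (b s))"
proof -
  interpret P: product_prob_space "\<lambda>_::nat\<times>nat. measure_pmf (bernoulli_pmf p)" UNIV
    by (intro product_prob_spaceI measure_pmf.prob_space_axioms)
  have eq: "{\<omega>. \<forall>s\<in>S. \<omega> s = b s} =
      prod_emb UNIV (\<lambda>_. measure_pmf (bernoulli_pmf p)) S (Pi\<^sub>E S (\<lambda>s. {b s}))"
  proof (rule set_eqI)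
    fix \<omega> :: "nat \<times> nat \<Rightarrow> bool"
    have "\<omega> \<in> extensional UNIV" by (simp add: extensional_def)
    then show "\<omega> \<in> {\<omega>. \<forall>s\<in>S. \<omega> s = b s} \<longleftrightarrow>
      \<omega> \<in> prod_emb UNIV (\<lambda>_. measure_pmf (bernoulli_pmf p)) S (Pi\<^sub>E S (\<lambda>s. {b s}))"
      by (simp add: prod_emb_iff restrict_PiE_iff Pi_iff)
  qed
  have "measure (binom_pointset p) {\<omega>. \<forall>s\<in>S. \<omega> s = b s} =
     (\<Prod>s\<in>S. measure (measure_pmf (bernoulli_pmf p)) {b s})"
    unfolding eq binom_pointset_def by (rule P.measure_PiM_emb) (simp_all add: S)
  then show ?thesis by (simp add: measure_pmf_single)
qed

lemma prod_bern:
  assumes S: "finite S" and Q: "Q \<subseteq> S" and p: "0 \<le> p" "p \<le> 1"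
  shows "(\<Prod>s\<in>S. pmf (bernoulli_pmf p) (s \<in> Q)) = p ^ card Q * (1 - p) ^ (card S - card Q)"
proof -
  have fQ: "finite Q" by (rule finite_subset[OF Q S])
  have "(\<Prod>s\<in>S. pmf (bernoulli_pmf p) (s \<in> Q)) =
        (\<Prod>s\<in>S - Q. pmf (bernoulli_pmf p) (s \<in> Q)) * (\<Prod>s\<in>Q. pmf (bernoulli_pmf p) (s \<in> Q))"
    by (rule prod.subset_diff[OF Q S])
  also have "(\<Prod>s\<in>S - Q. pmf (bernoulli_pmf p) (s \<in> Q)) = (\<Prod>s\<in>S - Q. 1 - p)"
    using p by (intro prod.cong) auto
  also have "(\<Prod>s\<in>Q. pmf (bernoulli_pmf p) (s \<in> Q)) = (\<Prod>s\<in>Q. p)"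
    using p by (intro prod.cong) auto
  finally show ?thesis using card_Diff_subset[OF fQ Q] by simp
qed

context conn begin

lemma phi_disj: assumes T: "card E = m - 1" and A: "A \<subseteq> Sx m E" shows "E \<inter> phi E ` A = {}"
proof (rule ccontr)
  assume "E \<inter> phi E ` A \<noteq> {}"
  then obtain s where s: "s \<in> A" "phi E s \<in> E" by blast
  have "s \<in> Sx m E" using s A by blast
  then have "phi E s \<notin> dtree m E" by (rule phi_notin)
  then show False using s dtree_eq[OF T] by simp
qed

lemma GX_cancel:
  assumes T: "card E = m - 1" and A: "A \<subseteq> Sx m E" and B: "B \<subseteq> Sx m E"
    and eq: "E \<union> phi E ` A = E \<union> phi E ` B"
  shows "A = B"
proof -
  have dA: "phi E ` A \<inter> E = {}" using phi_disj[OF T A] by (simp add: Int_commute)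
  have dB: "phi E ` B \<inter> E = {}" using phi_disj[OF T B] by (simp add: Int_commute)
  have "phi E ` A = phi E ` A - E" using dA by (simp add: Diff_triv)
  also have "\<dots> = (E \<union> phi E ` A) - E" by blast
  also have "\<dots> = (E \<union> phi E ` B) - E" using eq by simp
  also have "\<dots> = phi E ` B - E" by blast
  also have "\<dots> = phi E ` B" using dB by (simp add: Diff_triv)
  finally show ?thesis using inj_on_image_eq_iff[OF phi_inj A B] by simp
qed

lemma GX_event:
  assumes T: "card E = m - 1" and Q0: "Q0 \<subseteq> Sx m E"
  shows "{\<omega>. GX m E {x. \<omega> x} = E \<union> phi E ` Q0} = {\<omega>. \<forall>s\<in>Sx m E. \<omega> s = (s \<in> Q0)}"
proof (rule Collect_cong)
  fix \<omega> :: "nat \<times> nat \<Rightarrow> bool"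
  show "GX m E {x. \<omega> x} = E \<union> phi E ` Q0 \<longleftrightarrow> (\<forall>s\<in>Sx m E. \<omega> s = (s \<in> Q0))"
  proof
    assume "GX m E {x. \<omega> x} = E \<union> phi E ` Q0"
    then have "E \<union> phi E ` ({x. \<omega> x} \<inter> Sx m E) = E \<union> phi E ` Q0" by (simp add: GX_alt)
    moreover have "{x. \<omega> x} \<inter> Sx m E \<subseteq> Sx m E" by (rule Int_lower2)
    ultimately have "{x. \<omega> x} \<inter> Sx m E = Q0" using GX_cancel[OF T _ Q0] by simp
    then show "\<forall>s\<in>Sx m E. \<omega> s = (s \<in> Q0)" by blast
  next
    assume "\<forall>s\<in>Sx m E. \<omega> s = (s \<in> Q0)"
    then have "{x. \<omega> x} \<inter> Sx m E = Q0" using Q0 by blast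
    then show "GX m E {x. \<omega> x} = E \<union> phi E ` Q0" by (simp add: GX_alt)
  qed
qed

lemma meas_GX:
  assumes T: "card E = m - 1" and Q0: "Q0 \<subseteq> Sx m E" and p: "0 \<le> p" "p \<le> 1"
  shows "measure (binom_pointset p) {\<omega>. GX m E {x. \<omega> x} = E \<union> phi E ` Q0}
       = p ^ card Q0 * (1 - p) ^ (area m E - card Q0)"
  unfolding GX_event[OF T Q0] cyl_measure[OF Sx_finite p] prod_bern[OF Sx_finite Q0 p] card_Sx ..

lemma card_GX:
  assumes T: "card E = m - 1" and Q0: "Q0 \<subseteq> Sx m E"
  shows "card (E \<union> phi E ` Q0) = m - 1 + card Q0"
proof -
  have "finite Q0" by (rule finite_subset[OF Q0 Sx_finite])
  then have "finite (phi E ` Q0)" by simp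
  then have "card (E \<union> phi E ` Q0) = card E + card (phi E ` Q0)"
    using phi_disj[OF T Q0] finE by (simp add: card_Un_disjoint)
  also have "card (phi E ` Q0) = card Q0"
    using card_image[OF inj_on_subset[OF phi_inj Q0]] .
  finally show ?thesis using T by simp
qed

end




lemma trees_finite: "finite (trees m)"
proof -
  have "trees m \<subseteq> Pow (pairs m)" unfolding trees_def is_tree_def by auto
  then show ?thesis by (rule finite_subset) (simp add: pairs_finite)
qed

lemma GX_sub: "Q \<subseteq> Sx m T \<Longrightarrow> GX m T Q = T \<union> phi T ` Q"
  unfolding GX_alt by (simp add: Int_absorb2)

lemma LHS_val:
  assumes p: "0 < p" "p < 1" and m1: "1 \<le> m" and HC: "H \<in> Conn m"
  shows "(\<Sum>T\<in>trees m. tilt_prob p m T *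
            measure (binom_pointset p) {\<omega>. GX m T {x. \<omega> x} = H})
       = (p / (1 - p)) ^ (card H - (m - 1)) / (\<Sum>T\<in>trees m. tilt_weight p m T)"
proof -
  interpret conn H m using HC m1 unfolding Conn_def conn_def by simp
  let ?D = "dtree m H"
  let ?Q = "{s \<in> Sx m ?D. phi ?D s \<in> H}"
  have Dt: "?D \<in> trees m" by (rule D_tree)
  interpret cD: conn ?D m by (rule tree_conn[OF Dt m1])
  have cardD: "card ?D = m - 1" using tree_card[OF Dt] .
  have Qs: "?Q \<subseteq> Sx m ?D" by blast
  have Heq: "H = ?D \<union> phi ?D ` ?Q" by (rule decomp)
  have HGX: "GX m ?D ?Q = H" using GX_sub[OF Qs] Heq by simp
  have zero: "measure (binom_pointset p) {\<omega>. GX m T {x. \<omega> x} = H} = 0"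
    if T: "T \<in> trees m" "T \<noteq> ?D" for T
  proof -
    have "{\<omega>. GX m T {x. \<omega> x} = H} = {}"
    proof (rule ccontr)
      assume "{\<omega>. GX m T {x. \<omega> x} = H} \<noteq> {}"
      then obtain \<omega> where "GX m T {x. \<omega> x} = H" by blast
      then have "GX m T {x. \<omega> x} = GX m ?D ?Q" using HGX by simp
      then have "T = ?D" using GX_unique[OF T(1) Dt m1] by blast
      then show False using T by simp
    qed
    then show ?thesis by simp
  qed
  have "(\<Sum>T\<in>trees m. tilt_prob p m T * measure (binom_pointset p) {\<omega>. GX m T {x. \<omega> x} = H})
      = tilt_prob p m ?D * measure (binom_pointset p) {\<omega>. GX m ?D {x. \<omega> x} = H}"
  proof -
    have "(\<Sum>T\<in>trees m. tilt_prob p m T * measure (binom_pointset p) {\<omega>. GX m T {x. \<omega> x} = H})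
      = tilt_prob p m ?D * measure (binom_pointset p) {\<omega>. GX m ?D {x. \<omega> x} = H}
        + (\<Sum>T\<in>trees m - {?D}. tilt_prob p m T * measure (binom_pointset p) {\<omega>. GX m T {x. \<omega> x} = H})"
      by (rule sum.remove[OF trees_finite Dt])
    also have "(\<Sum>T\<in>trees m - {?D}. tilt_prob p m T * measure (binom_pointset p) {\<omega>. GX m T {x. \<omega> x} = H}) = 0"
      using zero by (intro sum.neutral) simp
    finally show ?thesis by simp
  qed
  also have "measure (binom_pointset p) {\<omega>. GX m ?D {x. \<omega> x} = H}
      = p ^ card ?Q * (1 - p) ^ (area m ?D - card ?Q)"
    using cD.meas_GX[OF cardD Qs] p Heq by simp
  finally have L: "(\<Sum>T\<in>trees m. tilt_prob p m T * measure (binom_pointset p) {\<omega>. GX m T {x. \<omega> x} = H})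
     = tilt_prob p m ?D * (p ^ card ?Q * (1 - p) ^ (area m ?D - card ?Q))" .
  have cH: "card H = m - 1 + card ?Q" using cD.card_GX[OF cardD Qs] Heq by simp
  have kle: "card ?Q \<le> area m ?D"
    using card_mono[OF cD.Sx_finite Qs] cD.card_Sx by simp
  define a where "a = area m ?D"
  define k where "k = card ?Q"
  have ka: "k \<le> a" using kle unfolding a_def k_def .
  have q: "0 < 1 - p" using p by simp
  have "tilt_prob p m ?D * (p ^ k * (1 - p) ^ (a - k))
      = inverse ((1 - p) ^ a) * (p ^ k * (1 - p) ^ (a - k)) / (\<Sum>T\<in>trees m. tilt_weight p m T)"
    unfolding tilt_prob_def tilt_weight_def a_def by (simp add: power_int_minus)
  also have "inverse ((1 - p) ^ a) * (p ^ k * (1 - p) ^ (a - k)) = (p / (1 - p)) ^ k"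
  proof -
    have "(1 - p) ^ a = (1 - p) ^ (a - k) * (1 - p) ^ k"
      using ka by (simp add: power_add[symmetric])
    then show ?thesis using q by (simp add: field_simps power_divide)
  qed
  finally show ?thesis using L cH unfolding a_def k_def by simp
qed

lemma LHS_zero:
  assumes m1: "1 \<le> m" and HC: "H \<notin> Conn m"
  shows "(\<Sum>T\<in>trees m. tilt_prob p m T *
            measure (binom_pointset p) {\<omega>. GX m T {x. \<omega> x} = H}) = 0"
proof (rule sum.neutral, rule ballI)
  fix T assume T: "T \<in> trees m"
  have "{\<omega>. GX m T {x. \<omega> x} = H} = {}" using GX_Conn[OF T m1] HC by auto
  then show "tilt_prob p m T * measure (binom_pointset p) {\<omega>. GX m T {x. \<omega> x} = H} = 0" by simp
qed

lemma sum_Pow_power: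
  fixes r :: real assumes S: "finite S"
  shows "(\<Sum>Q\<in>Pow S. r ^ card Q) = (r + 1) ^ card S"
proof -
  have "(\<Prod>x\<in>S. r + 1) = (\<Sum>X\<in>Pow S. (\<Prod>x\<in>X. r) * (\<Prod>x\<in>S - X. 1))"
    by (rule prod_add[OF S])
  then show ?thesis by simp
qed

lemma Z_eq:
  assumes p: "0 < p" "p < 1" and m1: "1 \<le> m"
  shows "(\<Sum>H\<in>Conn m. (p / (1 - p)) ^ (card H - (m - 1))) = (\<Sum>T\<in>trees m. tilt_weight p m T)"
proof -
  let ?F = "\<lambda>(T, Q). T \<union> phi T ` Q"
  let ?S = "SIGMA T:trees m. Pow (Sx m T)"
  have img: "Conn m = ?F ` ?S"
  proof (intro equalityI subsetI)
    fix H assume HC: "H \<in> Conn m"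
    interpret conn H m using HC m1 unfolding Conn_def conn_def by simp
    have "(dtree m H, {s \<in> Sx m (dtree m H). phi (dtree m H) s \<in> H}) \<in> ?S"
      using D_tree by auto
    moreover have "H = ?F (dtree m H, {s \<in> Sx m (dtree m H). phi (dtree m H) s \<in> H})"
      using decomp by simp
    ultimately show "H \<in> ?F ` ?S" by (rule rev_image_eqI)
  next
    fix H assume "H \<in> ?F ` ?S"
    then obtain T Q where T: "T \<in> trees m" and Q: "Q \<subseteq> Sx m T" and H: "H = T \<union> phi T ` Q" by auto
    show "H \<in> Conn m" using GX_Conn[OF T m1, of Q] GX_sub[OF Q] H by simp
  qed
  have inj: "inj_on ?F ?S"
  proof (rule inj_onI, clarify)
    fix T Q T' Q' assume T: "T \<in> trees m" and Q: "Q \<subseteq> Sx m T"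
      and T': "T' \<in> trees m" and Q': "Q' \<subseteq> Sx m T'"
      and eq: "T \<union> phi T ` Q = T' \<union> phi T' ` Q'"
    have "GX m T Q = GX m T' Q'" using eq GX_sub[OF Q] GX_sub[OF Q'] by simp
    then have TT: "T = T'" using GX_unique[OF T T' m1] by blast
    interpret cT: conn T m by (rule tree_conn[OF T m1])
    have "Q = Q'" using cT.GX_cancel[OF tree_card[OF T] Q] Q' eq TT by simp
    then show "T = T' \<and> Q = Q'" using TT by simp
  qed
  have fin: "\<forall>T\<in>trees m. finite (Pow (Sx m T))"
    using conn.Sx_finite[OF tree_conn[OF _ m1]] by simp
  have "(\<Sum>H\<in>Conn m. (p / (1 - p)) ^ (card H - (m - 1)))
      = (\<Sum>x\<in>?S. (p / (1 - p)) ^ (card (?F x) - (m - 1)))"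
    unfolding img by (subst sum.reindex[OF inj]) (simp only: o_def)
  also have "\<dots> = (\<Sum>x\<in>?S. (p / (1 - p)) ^ card (snd x))"
  proof (rule sum.cong[OF refl])
    fix x assume "x \<in> ?S"
    then obtain T Q where x: "x = (T, Q)" and T: "T \<in> trees m" and Q: "Q \<subseteq> Sx m T" by auto
    have "card (T \<union> phi T ` Q) = m - 1 + card Q"
      using conn.card_GX[OF tree_conn[OF T m1] tree_card[OF T] Q] .
    then show "(p / (1 - p)) ^ (card (?F x) - (m - 1)) = (p / (1 - p)) ^ card (snd x)" using x by simp
  qed
  also have "\<dots> = (\<Sum>T\<in>trees m. \<Sum>Q\<in>Pow (Sx m T). (p / (1 - p)) ^ card Q)"
    using sum.Sigma[OF trees_finite fin, of "\<lambda>T Q. (p / (1 - p)) ^ card Q"] by (simp add: case_prod_beta)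
  also have "\<dots> = (\<Sum>T\<in>trees m. tilt_weight p m T)"
  proof (rule sum.cong[OF refl])
    fix T assume T: "T \<in> trees m"
    have "(\<Sum>Q\<in>Pow (Sx m T). (p / (1 - p)) ^ card Q) = (p / (1 - p) + 1) ^ area m T"
      using sum_Pow_power[OF conn.Sx_finite[OF tree_conn[OF T m1]]] conn.card_Sx[OF tree_conn[OF T m1]]
      by simp
    also have "p / (1 - p) + 1 = inverse (1 - p)" using p by (simp add: field_simps)
    finally show "(\<Sum>Q\<in>Pow (Sx m T). (p / (1 - p)) ^ card Q) = tilt_weight p m T"
      unfolding tilt_weight_def by (simp add: power_int_minus power_inverse)
  qed
  finally show ?thesis .
qed




lemma adj_sym: assumes "(a, b) \<in> (adj_rel E)\<^sup>*" shows "(b, a) \<in> (adj_rel E)\<^sup>*"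
proof -
  have "sym (adj_rel E)" unfolding sym_def adj_rel_def by (auto simp: insert_commute)
  then have "sym ((adj_rel E)\<^sup>*)" by (rule sym_rtrancl)
  then show ?thesis using assms unfolding sym_def by blast
qed

lemma adjI: "{a, b} \<in> E \<Longrightarrow> a \<noteq> b \<Longrightarrow> (a, b) \<in> adj_rel E"
  unfolding adj_rel_def by simp

lemma adjD: "(a, b) \<in> adj_rel E \<Longrightarrow> {a, b} \<in> E \<and> a \<noteq> b"
  unfolding adj_rel_def by simp

lemma comp_sub_gen: assumes E: "E \<subseteq> pairs n" and a: "a \<in> {1..n}" shows "comp E a \<subseteq> {1..n}"
proof
  fix u assume "u \<in> comp E a"
  then have "(a, u) \<in> (adj_rel E)\<^sup>*" by (simp add: comp_def)
  then show "u \<in> {1..n}"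
  proof (induction rule: rtrancl_induct)
    case base then show ?case using a .
  next
    case (step y z)
    then have "{y, z} \<in> pairs n" using E adjD by blast
    then show ?case using pairs_mem[of y z n] by simp
  qed
qed

lemma comp_closed: assumes "x \<in> comp E v" "{x, y} \<in> E" "x \<noteq> y" shows "y \<in> comp E v"
proof -
  have "y \<in> Nbr E x" using assms(2,3) unfolding Nbr_def by simp
  then show ?thesis by (rule comp_step[OF assms(1)])
qed

lemma edge_side:
  assumes E: "E \<subseteq> pairs n" and e: "e \<in> E" and x: "x \<in> e" "x \<in> comp E v"
  shows "e \<subseteq> comp E v"
proof -
  obtain a b where ab: "e = {a, b}" "a \<noteq> b" using pairs_card2 e E by blast
  show ?thesis
  proof (cases "x = a")
    case True
    then have "b \<in> comp E v" using comp_closed[of a E v b] x e ab by simp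
    then show ?thesis using ab x True by simp
  next
    case False
    then have xb: "x = b" using x ab by simp
    have "{b, a} \<in> E" using e ab by (simp add: insert_commute)
    then have "a \<in> comp E v" using comp_closed[of b E v a] x xb ab by simp
    then show ?thesis using ab x xb by simp
  qed
qed

lemma pairs_ne: "e \<in> pairs n \<Longrightarrow> e \<noteq> {}"
  using pairs_card2 by blast

lemma rank_mono:
  assumes C: "finite C" and x: "x \<in> C" and y: "y \<in> C" and xy: "x < y"
  shows "rank C x < rank C y"
proof -
  have s1: "{z \<in> C. z \<le> x} \<subseteq> {z \<in> C. z \<le> y}" using xy by auto
  have s2: "y \<in> {z \<in> C. z \<le> y}" "y \<notin> {z \<in> C. z \<le> x}" using y xy by auto
  have "{z \<in> C. z \<le> x} \<subset> {z \<in> C. z \<le> y}"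
  proof (rule psubsetI[OF s1])
    show "{z \<in> C. z \<le> x} \<noteq> {z \<in> C. z \<le> y}" using s2 by blast
  qed
  moreover have "finite {z \<in> C. z \<le> y}" using C by simp
  ultimately show ?thesis unfolding rank_def by (rule psubset_card_mono[rotated])
qed

lemma rank_inj: assumes C: "finite C" shows "inj_on (rank C) C"
proof (rule inj_onI)
  fix x y assume x: "x \<in> C" and y: "y \<in> C" and eq: "rank C x = rank C y"
  show "x = y"
  proof (rule ccontr)
    assume "x \<noteq> y"
    then consider "x < y" | "y < x" by linarith
    then show False
    proof cases
      case 1 then show False using rank_mono[OF C x y] eq by simp
    next
      case 2 then show False using rank_mono[OF C y x] eq by simp
    qed
  qed
qed

lemma rank_range: assumes C: "finite C" and x: "x \<in> C" shows "rank C x \<in> {1..card C}"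
proof -
  have "x \<in> {z \<in> C. z \<le> x}" using x by simp
  moreover have "finite {z \<in> C. z \<le> x}" using C by simp
  ultimately have "0 < card {z \<in> C. z \<le> x}" by (auto simp: card_gt_0_iff)
  then have "1 \<le> rank C x" unfolding rank_def by simp
  moreover have "rank C x \<le> card C" unfolding rank_def using C by (intro card_mono) auto
  ultimately show ?thesis by simp
qed

lemma rank_image: assumes C: "finite C" shows "rank C ` C = {1..card C}"
proof -
  have sub: "rank C ` C \<subseteq> {1..card C}" using rank_range[OF C] by blast
  have "card (rank C ` C) = card C" using card_image[OF rank_inj[OF C]] .
  then show ?thesis using sub by (intro card_subset_eq) simp_all
qed

definition unrank :: "nat set \<Rightarrow> nat \<Rightarrow> nat" where
  "unrank C = the_inv_into C (rank C)"

lemma unrank_rank: "finite C \<Longrightarrow> x \<in> C \<Longrightarrow> unrank C (rank C x) = x"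
  unfolding unrank_def by (rule the_inv_into_f_f[OF rank_inj])

lemma rank_unrank: assumes C: "finite C" and w: "w \<in> {1..card C}"
  shows "rank C (unrank C w) = w" and "unrank C w \<in> C"
proof -
  have w': "w \<in> rank C ` C" using w rank_image[OF C] by simp
  show "rank C (unrank C w) = w" unfolding unrank_def by (rule f_the_inv_into_f[OF rank_inj[OF C] w'])
  show "unrank C w \<in> C" unfolding unrank_def by (rule the_inv_into_into[OF rank_inj[OF C] w' subset_refl])
qed

definition Cs :: "nat \<Rightarrow> nat \<Rightarrow> nat \<Rightarrow> nat set set" where
  "Cs n m v = {C. C \<subseteq> {1..n} \<and> v \<in> C \<and> card C = m}"

definition Out :: "nat \<Rightarrow> nat set \<Rightarrow> nat set set set" where
  "Out n C = {F. F \<subseteq> pairs n \<and> (\<forall>e\<in>F. e \<inter> C = {})}"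

definition pull :: "nat set \<Rightarrow> nat set set \<Rightarrow> nat set set" where
  "pull C H = (\<lambda>e. unrank C ` e) ` H"

lemma rank_image_pair: "rank C ` {a, b} = {rank C a, rank C b}" by simp

lemma relabel_Conn:
  assumes E: "E \<subseteq> pairs n" and v: "v \<in> {1..n}" and cm: "card (comp E v) = m"
  shows "comp_relabel E v \<in> Conn m"
proof -
  let ?C = "comp E v" and ?rk = "rank (comp E v)"
  let ?G = "comp_relabel E v"
  have fC: "finite ?C" by (rule finite_subset[OF comp_sub_gen[OF E v]]) simp
  have vC: "v \<in> ?C" by (rule comp_self)
  have "0 < card ?C" using fC vC by (auto simp: card_gt_0_iff)
  then have m1: "1 \<le> m" using cm by simp
  have inj: "inj_on ?rk ?C" by (rule rank_inj[OF fC])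
  have rng: "x \<in> ?C \<Longrightarrow> ?rk x \<in> {1..m}" for x using rank_range[OF fC] cm by simp
  have Gdef: "?G = (\<lambda>e. ?rk ` e) ` {e \<in> E. e \<subseteq> ?C}" unfolding comp_relabel_def ..
  have Gpairs: "?G \<subseteq> pairs m"
  proof
    fix f assume "f \<in> ?G"
    then obtain e where e: "e \<in> E" "e \<subseteq> ?C" "f = ?rk ` e" unfolding Gdef by blast
    obtain a b where ab: "e = {a, b}" "a \<noteq> b" using pairs_card2 e(1) E by blast
    have abC: "a \<in> ?C" "b \<in> ?C" using e(2) ab by auto
    have "?rk a \<noteq> ?rk b" using inj abC ab unfolding inj_on_def by blast
    moreover have "?rk a \<in> {1..m}" "?rk b \<in> {1..m}" using rng abC by auto
    ultimately have "{?rk a, ?rk b} \<in> pairs m" by (intro pairs_memI)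
    then show "f \<in> pairs m" using e(3) ab by simp
  qed
  have reach: "(?rk v, ?rk u) \<in> (adj_rel ?G)\<^sup>*" if u: "u \<in> ?C" for u
  proof -
    have "(v, u) \<in> (adj_rel E)\<^sup>*" using u by (simp add: comp_def)
    then show ?thesis
    proof (induction rule: rtrancl_induct)
      case base then show ?case by simp
    next
      case (step x y)
      have xC: "x \<in> ?C" using step.hyps(1) by (simp add: comp_def)
      have xy: "{x, y} \<in> E" "x \<noteq> y" using adjD[OF step.hyps(2)] by auto
      have yC: "y \<in> ?C" by (rule comp_closed[OF xC xy])
      have "{x, y} \<in> {e \<in> E. e \<subseteq> ?C}" using xy xC yC by simp
      then have "?rk ` {x, y} \<in> ?G" unfolding Gdef by (rule imageI)
      then have "{?rk x, ?rk y} \<in> ?G" by simp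
      moreover have "?rk x \<noteq> ?rk y" using inj xC yC xy unfolding inj_on_def by blast
      ultimately have "(?rk x, ?rk y) \<in> adj_rel ?G" by (rule adjI)
      with step.IH show ?case by (rule rtrancl_into_rtrancl)
    qed
  qed
  have "{1..m} \<subseteq> comp ?G 1"
  proof
    fix w assume w: "w \<in> {1..m}"
    have img: "?rk ` ?C = {1..m}" using rank_image[OF fC] cm by simp
    obtain u where u: "u \<in> ?C" "w = ?rk u" using w img by (metis imageE)
    have "1 \<in> {1..m}" using m1 by simp
    then obtain u1 where u1: "u1 \<in> ?C" "1 = ?rk u1" using img by (metis imageE)
    have "(1, ?rk v) \<in> (adj_rel ?G)\<^sup>*" using adj_sym[OF reach[OF u1(1)]] u1(2) by simp
    moreover have "(?rk v, w) \<in> (adj_rel ?G)\<^sup>*" using reach[OF u(1)] u(2) by simp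
    ultimately have "(1, w) \<in> (adj_rel ?G)\<^sup>*" by (rule rtrancl_trans)
    then show "w \<in> comp ?G 1" by (simp add: comp_def)
  qed
  moreover have "comp ?G 1 \<subseteq> {1..m}" by (rule comp_sub[OF Gpairs m1])
  ultimately have "comp ?G 1 = {1..m}" by blast
  then show ?thesis using Gpairs unfolding Conn_def by simp
qed




lemma Conn_reach:
  assumes H: "H \<in> Conn m" and a: "a \<in> {1..m}" and b: "b \<in> {1..m}"
  shows "(a, b) \<in> (adj_rel H)\<^sup>*"
proof -
  have c: "comp H 1 = {1..m}" using H unfolding Conn_def by simp
  have "a \<in> comp H 1" "b \<in> comp H 1" using a b c by simp_all
  then have 1: "(1, a) \<in> (adj_rel H)\<^sup>*" and 2: "(1, b) \<in> (adj_rel H)\<^sup>*" unfolding comp_def by simp_all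
  have "(a, 1) \<in> (adj_rel H)\<^sup>*" by (rule adj_sym[OF 1])
  from this 2 show ?thesis by (rule rtrancl_trans)
qed

lemma Conn_sub: assumes "H \<in> Conn m" "e \<in> H" shows "e \<subseteq> {1..m}"
proof -
  have "e \<in> pairs m" using assms unfolding Conn_def by blast
  then obtain a b where "e = {a, b}" "a \<in> {1..m}" "b \<in> {1..m}" using pairs_card2[of e m] by blast
  then show ?thesis by simp
qed

locale build =
  fixes n m v C H F
  assumes C: "C \<in> Cs n m v" and H: "H \<in> Conn m" and F: "F \<in> Out n C"
begin

lemma C_sub: "C \<subseteq> {1..n}" and vC: "v \<in> C" and cC: "card C = m"
  using C unfolding Cs_def by auto

lemma fC: "finite C"
  by (rule finite_subset[OF C_sub]) simp

lemma Hp: "H \<subseteq> pairs m" and Hc: "comp H 1 = {1..m}"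
  using H unfolding Conn_def by auto

lemma Fp: "F \<subseteq> pairs n" and Fd: "e \<in> F \<Longrightarrow> e \<inter> C = {}"
  using F unfolding Out_def by auto

abbreviation "u \<equiv> unrank C"
abbreviation "rk \<equiv> rank C"

lemma u_in: "w \<in> {1..m} \<Longrightarrow> u w \<in> C"
  using rank_unrank(2)[OF fC] cC by simp

lemma rk_u: "w \<in> {1..m} \<Longrightarrow> rk (u w) = w"
  using rank_unrank(1)[OF fC] cC by simp

lemma u_rk: "x \<in> C \<Longrightarrow> u (rk x) = x"
  by (rule unrank_rank[OF fC])

lemma rk_in: "x \<in> C \<Longrightarrow> rk x \<in> {1..m}"
  using rank_range[OF fC] cC by simp

lemma u_inj: assumes a: "a \<in> {1..m}" and b: "b \<in> {1..m}" and eq: "u a = u b" shows "a = b"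
proof -
  have "rk (u a) = rk (u b)" using eq by simp
  then show ?thesis using rk_u[OF a] rk_u[OF b] by simp
qed

lemma pull_edge: assumes e: "e \<in> H"
  shows "\<exists>a b. e = {a, b} \<and> a \<in> {1..m} \<and> b \<in> {1..m} \<and> a \<noteq> b \<and> u ` e = {u a, u b} \<and> u a \<noteq> u b"
proof -
  obtain a b where ab: "e = {a, b}" "a \<in> {1..m}" "b \<in> {1..m}" "a \<noteq> b"
    using pairs_card2 e Hp by blast
  have "u a \<noteq> u b" using u_inj ab by blast
  then show ?thesis using ab by auto
qed

lemma pull_sub_C: assumes "e' \<in> pull C H" shows "e' \<subseteq> C"
proof -
  obtain e where e: "e \<in> H" "e' = u ` e" using assms unfolding pull_def by blast
  have "e \<subseteq> {1..m}" by (rule Conn_sub[OF H e(1)])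
  then show ?thesis using e(2) u_in by blast
qed

lemma pull_pairs: "pull C H \<subseteq> pairs n"
proof
  fix e' assume "e' \<in> pull C H"
  then obtain e where e: "e \<in> H" "e' = u ` e" unfolding pull_def by blast
  obtain a b where ab: "e = {a, b}" "a \<in> {1..m}" "b \<in> {1..m}" "u ` e = {u a, u b}" "u a \<noteq> u b"
    using pull_edge[OF e(1)] by blast
  have "u a \<in> C" "u b \<in> C" using u_in ab by auto
  then have "u a \<in> {1..n}" "u b \<in> {1..n}" using C_sub by blast+
  then show "e' \<in> pairs n" using e ab pairs_memI by simp
qed

abbreviation "EE \<equiv> pull C H \<union> F"

lemma EE_pairs: "EE \<subseteq> pairs n"
  using pull_pairs Fp by blast

lemma comp_EE_sub: "comp EE v \<subseteq> C"
proof
  fix x assume "x \<in> comp EE v"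
  then have "(v, x) \<in> (adj_rel EE)\<^sup>*" by (simp add: comp_def)
  then show "x \<in> C"
  proof (induction rule: rtrancl_induct)
    case base then show ?case by (rule vC)
  next
    case (step x y)
    have xy: "{x, y} \<in> EE" using adjD[OF step.hyps(2)] by simp
    have "{x, y} \<notin> F" using Fd step.IH by blast
    then have "{x, y} \<in> pull C H" using xy by simp
    then show ?case using pull_sub_C by blast
  qed
qed

lemma comp_EE: "comp EE v = C"
proof
  show "comp EE v \<subseteq> C" by (rule comp_EE_sub)
  have lift: "(u a, u b) \<in> (adj_rel EE)\<^sup>*" if "(a, b) \<in> (adj_rel H)\<^sup>*" for a b
    using that
  proof (induction rule: rtrancl_induct)
    case base then show ?case by simp
  next
    case (step x y)
    have xy: "{x, y} \<in> H" using adjD[OF step.hyps(2)] by simp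
    obtain a' b' where ab: "{x, y} = {a', b'}" "u ` {x, y} = {u a', u b'}" "u a' \<noteq> u b'"
      using pull_edge[OF xy] by blast
    have "u x \<noteq> u y" using ab by (auto simp: doubleton_eq_iff)
    moreover have "{u x, u y} \<in> EE"
    proof -
      have "u ` {x, y} \<in> pull C H" using xy unfolding pull_def by (rule imageI)
      then show ?thesis by simp
    qed
    ultimately have "(u x, u y) \<in> adj_rel EE" using adjI by blast
    with step.IH show ?case by (rule rtrancl_into_rtrancl)
  qed
  show "C \<subseteq> comp EE v"
  proof
    fix c assume c: "c \<in> C"
    have "(rk v, rk c) \<in> (adj_rel H)\<^sup>*" using Conn_reach[OF H rk_in[OF vC] rk_in[OF c]] .
    then have "(u (rk v), u (rk c)) \<in> (adj_rel EE)\<^sup>*" by (rule lift)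
    then show "c \<in> comp EE v" using u_rk[OF vC] u_rk[OF c] by (simp add: comp_def)
  qed
qed

lemma inside_EE: "{e \<in> EE. e \<subseteq> C} = pull C H"
proof (intro equalityI subsetI)
  fix e assume e: "e \<in> {e \<in> EE. e \<subseteq> C}"
  show "e \<in> pull C H"
  proof (rule ccontr)
    assume "e \<notin> pull C H"
    then have "e \<in> F" using e by simp
    then have "e \<inter> C = {}" "e \<noteq> {}" using Fd Fp pairs_ne by blast+
    then show False using e by blast
  qed
next
  fix e assume "e \<in> pull C H"
  then show "e \<in> {e \<in> EE. e \<subseteq> C}" using pull_sub_C by blast
qed

lemma rk_u_set: assumes "e \<subseteq> {1..m}" shows "rk ` u ` e = e"
proof -
  have "rk ` u ` e = (\<lambda>x. rk (u x)) ` e" by (simp add: image_image)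
  also have "\<dots> = (\<lambda>x. x) ` e" using assms rk_u by (intro image_cong) auto
  finally show ?thesis by simp
qed

lemma relabel_EE: "comp_relabel EE v = H"
proof -
  have "comp_relabel EE v = (\<lambda>e. rk ` e) ` pull C H"
    unfolding comp_relabel_def comp_EE inside_EE ..
  also have "\<dots> = (\<lambda>e. rk ` u ` e) ` H" unfolding pull_def image_image ..
  also have "\<dots> = H"
  proof -
    have "(\<lambda>e. rk ` u ` e) ` H = (\<lambda>e. e) ` H"
      using rk_u_set Conn_sub[OF H] by (intro image_cong) auto
    then show ?thesis by simp
  qed
  finally show ?thesis .
qed

lemma card_EE: "card EE = card H + card F"
proof -
  have fP: "finite (pull C H)" by (rule finite_subset[OF pull_pairs pairs_finite])
  have fF: "finite F" by (rule finite_subset[OF Fp pairs_finite])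
  have disj: "pull C H \<inter> F = {}"
  proof (rule ccontr)
    assume "pull C H \<inter> F \<noteq> {}"
    then obtain e where e: "e \<in> pull C H" "e \<in> F" by blast
    then have "e \<subseteq> C" "e \<inter> C = {}" "e \<noteq> {}" using pull_sub_C Fd Fp pairs_ne by blast+
    then show False by blast
  qed
  have inj: "inj_on (\<lambda>e. u ` e) H"
  proof (rule inj_onI)
    fix e1 e2 assume e: "e1 \<in> H" "e2 \<in> H" "u ` e1 = u ` e2"
    then have "rk ` u ` e1 = rk ` u ` e2" by simp
    then show "e1 = e2" using rk_u_set Conn_sub[OF H] e by metis
  qed
  have "card (pull C H) = card H" unfolding pull_def by (rule card_image[OF inj])
  then show ?thesis using card_Un_disjoint[OF fP fF disj] by simp
qed

end

lemma build_props:
  assumes "C \<in> Cs n m v" "H \<in> Conn m" "F \<in> Out n C"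
  shows "pull C H \<union> F \<subseteq> pairs n" "comp (pull C H \<union> F) v = C"
    "comp_relabel (pull C H \<union> F) v = H" "card (pull C H \<union> F) = card H + card F"
proof -
  interpret build n m v C H F using assms by unfold_locales
  show "pull C H \<union> F \<subseteq> pairs n" by (rule EE_pairs)
  show "comp (pull C H \<union> F) v = C" by (rule comp_EE)
  show "comp_relabel (pull C H \<union> F) v = H" by (rule relabel_EE)
  show "card (pull C H \<union> F) = card H + card F" by (rule card_EE)
qed

lemma decompose:
  assumes E: "E \<subseteq> pairs n" and v: "v \<in> {1..n}" and cm: "card (comp E v) = m"
  shows "comp E v \<in> Cs n m v" "{e \<in> E. \<not> e \<subseteq> comp E v} \<in> Out n (comp E v)"
    "E = pull (comp E v) (comp_relabel E v) \<union> {e \<in> E. \<not> e \<subseteq> comp E v}"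
proof -
  let ?C = "comp E v"
  have Csub: "?C \<subseteq> {1..n}" by (rule comp_sub_gen[OF E v])
  have fC: "finite ?C" by (rule finite_subset[OF Csub]) simp
  show "?C \<in> Cs n m v" using Csub comp_self cm unfolding Cs_def by simp
  have "e \<inter> ?C = {}" if e: "e \<in> E" "\<not> e \<subseteq> ?C" for e
    using edge_side[OF E e(1)] e(2) by blast
  then show "{e \<in> E. \<not> e \<subseteq> ?C} \<in> Out n ?C" using E unfolding Out_def by auto
  have "pull ?C (comp_relabel E v) = (\<lambda>e. unrank ?C ` rank ?C ` e) ` {e \<in> E. e \<subseteq> ?C}"
    unfolding pull_def comp_relabel_def image_image ..
  also have "\<dots> = (\<lambda>e. e) ` {e \<in> E. e \<subseteq> ?C}"
  proof (rule image_cong[OF refl])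
    fix e assume "e \<in> {e \<in> E. e \<subseteq> ?C}"
    then have "e \<subseteq> ?C" by simp
    then show "unrank ?C ` rank ?C ` e = e" using unrank_rank[OF fC] by (simp add: image_image subset_iff)
  qed
  finally have "pull ?C (comp_relabel E v) = {e \<in> E. e \<subseteq> ?C}" by simp
  then show "E = pull ?C (comp_relabel E v) \<union> {e \<in> E. \<not> e \<subseteq> ?C}" by blast
qed

lemma build_inj:
  assumes H: "H \<in> Conn m"
  shows "inj_on (\<lambda>(C, F). pull C H \<union> F) (SIGMA C:Cs n m v. Out n C)"
proof (rule inj_onI, clarify)
  fix C F C' F' assume C: "C \<in> Cs n m v" and F: "F \<in> Out n C" and C': "C' \<in> Cs n m v"
    and F': "F' \<in> Out n C'" and eq: "pull C H \<union> F = pull C' H \<union> F'"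
  have CC: "C = C'" using build_props(2)[OF C H F] build_props(2)[OF C' H F'] eq by simp
  have Fe: "F = {e \<in> pull C H \<union> F. \<not> e \<subseteq> C}" if "C \<in> Cs n m v" "F \<in> Out n C" for C F
  proof -
    interpret build n m v C H F using that H by unfold_locales
    show ?thesis
    proof (intro equalityI subsetI)
      fix e assume e: "e \<in> F"
      then have "e \<inter> C = {}" "e \<noteq> {}" using Fd Fp pairs_ne by blast+
      then show "e \<in> {e \<in> pull C H \<union> F. \<not> e \<subseteq> C}" using e by blast
    next
      fix e assume "e \<in> {e \<in> pull C H \<union> F. \<not> e \<subseteq> C}"
      then show "e \<in> F" using pull_sub_C by blast
    qed
  qed
  have "F = {e \<in> pull C H \<union> F. \<not> e \<subseteq> C}" by (rule Fe[OF C F])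
  also have "\<dots> = {e \<in> pull C' H \<union> F'. \<not> e \<subseteq> C'}" using eq CC by (simp only:)
  also have "\<dots> = F'" by (rule Fe[OF C' F', symmetric])
  finally have "F = F'" .
  then show "C = C' \<and> F = F'" using CC by simp
qed




definition wt :: "nat \<Rightarrow> real \<Rightarrow> nat set set \<Rightarrow> real" where
  "wt n p E = p ^ card E * (1 - p) ^ (card (pairs n) - card E)"

lemma wt_pos: "0 < p \<Longrightarrow> p < 1 \<Longrightarrow> 0 < wt n p E"
  unfolding wt_def by simp

lemma pmf_gnp:
  assumes p: "0 < p" "p < 1"
  shows "pmf (gnp n p) E = (if E \<subseteq> pairs n then wt n p E else 0)"
proof -
  let ?N = "pairs n"
  let ?M = "Pi_pmf ?N False (\<lambda>_. bernoulli_pmf p)"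
  let ?f = "\<lambda>\<omega>. {e \<in> ?N. \<omega> e}"
  have fN: "finite ?N" by (rule pairs_finite)
  have sM: "set_pmf ?M \<subseteq> {f. \<forall>x. x \<notin> ?N \<longrightarrow> f x = False}" by (rule set_Pi_pmf_subset[OF fN])
  show ?thesis
  proof (cases "E \<subseteq> ?N")
    case True
    let ?w = "\<lambda>e. e \<in> E"
    have fw: "?f ?w = E" using True by blast
    have pw: "pmf ?M ?w = wt n p E"
    proof -
      have "pmf ?M ?w = (\<Prod>x\<in>?N. pmf (bernoulli_pmf p) (x \<in> E))"
        using True by (subst pmf_Pi[OF fN]) auto
      also have "\<dots> = p ^ card E * (1 - p) ^ (card ?N - card E)"
        by (rule prod_bern[OF fN True]) (use p in auto)
      finally show ?thesis unfolding wt_def .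
    qed
    have inS: "?w \<in> set_pmf ?M" using pw wt_pos[OF p, of n E] by (simp add: set_pmf_iff)
    have inj: "inj_on ?f (set_pmf ?M)"
    proof (rule inj_onI)
      fix a b assume a: "a \<in> set_pmf ?M" and b: "b \<in> set_pmf ?M" and eq: "?f a = ?f b"
      show "a = b"
      proof
        fix x show "a x = b x"
        proof (cases "x \<in> ?N")
          case True then show ?thesis using eq by blast
        next
          case False then show ?thesis using a b sM by blast
        qed
      qed
    qed
    have "pmf (gnp n p) E = pmf (map_pmf ?f ?M) (?f ?w)" unfolding gnp_def fw ..
    also have "\<dots> = pmf ?M ?w" by (rule pmf_map_inj[OF inj inS])
    finally show ?thesis using pw True by simp
  next
    case False
    have "E \<notin> set_pmf (gnp n p)" using False unfolding gnp_def by auto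
    then show ?thesis using False by (simp add: set_pmf_iff)
  qed
qed

lemma set_gnp: "set_pmf (gnp n p) \<subseteq> Pow (pairs n)"
  unfolding gnp_def by auto

lemma measure_fin:
  assumes X: "finite X" and s: "set_pmf M \<subseteq> X"
  shows "measure (measure_pmf M) A = (\<Sum>x\<in>A \<inter> X. pmf M x)"
proof -
  have "measure (measure_pmf M) A = measure (measure_pmf M) (A \<inter> set_pmf M)"
    by (rule measure_Int_set_pmf[symmetric])
  also have "A \<inter> set_pmf M = (A \<inter> X) \<inter> set_pmf M" using s by blast
  also have "measure (measure_pmf M) \<dots> = measure (measure_pmf M) (A \<inter> X)"
    by (rule measure_Int_set_pmf)
  also have "\<dots> = (\<Sum>x\<in>A \<inter> X. pmf M x)" by (rule measure_measure_pmf_finite) (use X in simp)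
  finally show ?thesis .
qed

lemma RHS_formula:
  assumes p: "0 < p" "p < 1"
    and ne: "set_pmf (gnp n p) \<inter> {E. card (comp E v) = m} \<noteq> {}"
  shows "pmf (Gpm n p m v) H =
    (\<Sum>E\<in>{E \<in> Pow (pairs n). card (comp E v) = m \<and> comp_relabel E v = H}. wt n p E) /
    (\<Sum>E\<in>{E \<in> Pow (pairs n). card (comp E v) = m}. wt n p E)"
proof -
  let ?G = "gnp n p" and ?B = "{E. card (comp E v) = m}" and ?P = "Pow (pairs n)"
  let ?g = "\<lambda>E. comp_relabel E v"
  have fP: "finite ?P" using pairs_finite by simp
  have den: "measure (measure_pmf ?G) ?B = (\<Sum>E\<in>{E \<in> ?P. card (comp E v) = m}. wt n p E)"
  proof -
    have "measure (measure_pmf ?G) ?B = (\<Sum>E\<in>?B \<inter> ?P. pmf ?G E)"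
      by (rule measure_fin[OF fP set_gnp])
    also have "?B \<inter> ?P = {E \<in> ?P. card (comp E v) = m}" by blast
    also have "(\<Sum>E\<in>{E \<in> ?P. card (comp E v) = m}. pmf ?G E) = (\<Sum>E\<in>{E \<in> ?P. card (comp E v) = m}. wt n p E)"
      using pmf_gnp[OF p] by (intro sum.cong) auto
    finally show ?thesis .
  qed
  have sc: "set_pmf (cond_pmf ?G ?B) \<subseteq> ?P" using set_cond_pmf[OF ne] set_gnp by blast
  have "pmf (Gpm n p m v) H = measure (measure_pmf (cond_pmf ?G ?B)) (?g -` {H})"
    unfolding Gpm_def by (rule pmf_map)
  also have "\<dots> = (\<Sum>E\<in>?g -` {H} \<inter> ?P. pmf (cond_pmf ?G ?B) E)"
    by (rule measure_fin[OF fP sc])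
  also have "\<dots> = (\<Sum>E\<in>?g -` {H} \<inter> ?P. if E \<in> ?B then pmf ?G E / measure (measure_pmf ?G) ?B else 0)"
    using pmf_cond[OF ne] by (intro sum.cong) auto
  also have "\<dots> = (\<Sum>E\<in>{E \<in> ?g -` {H} \<inter> ?P. E \<in> ?B}. pmf ?G E / measure (measure_pmf ?G) ?B)"
    by (rule sum.inter_filter[symmetric]) (use fP in simp)
  also have "{E \<in> ?g -` {H} \<inter> ?P. E \<in> ?B} = {E \<in> ?P. card (comp E v) = m \<and> comp_relabel E v = H}"
    by blast
  also have "(\<Sum>E\<in>{E \<in> ?P. card (comp E v) = m \<and> comp_relabel E v = H}. pmf ?G E / measure (measure_pmf ?G) ?B)
     = (\<Sum>E\<in>{E \<in> ?P. card (comp E v) = m \<and> comp_relabel E v = H}. wt n p E) / measure (measure_pmf ?G) ?B"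
    unfolding sum_divide_distrib[symmetric] using pmf_gnp[OF p] by (intro arg_cong2[where f="(/)"] sum.cong) auto
  finally show ?thesis unfolding den .
qed




lemma pairs_Conn: assumes m1: "1 \<le> m" shows "pairs m \<in> Conn m"
proof -
  have "{1..m} \<subseteq> comp (pairs m) 1"
  proof
    fix w assume w: "w \<in> {1..m}"
    show "w \<in> comp (pairs m) 1"
    proof (cases "w = 1")
      case True then show ?thesis using comp_self by simp
    next
      case False
      have "{1, w} \<in> pairs m" using w m1 False by (intro pairs_memI) auto
      then have "(1, w) \<in> adj_rel (pairs m)" using False by (intro adjI) auto
      then have "(1, w) \<in> (adj_rel (pairs m))\<^sup>*" by (rule r_into_rtrancl)
      then show ?thesis by (simp add: comp_def)
    qed
  qed
  moreover have "comp (pairs m) 1 \<subseteq> {1..m}" by (rule comp_sub[OF subset_refl m1])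
  ultimately show ?thesis unfolding Conn_def by blast
qed

lemma Cs_ne:
  assumes v: "v \<in> {1..n}" and m1: "1 \<le> m" and mn: "m \<le> n"
  obtains C where "C \<in> Cs n m v"
proof -
  have "card ({1..n} - {v}) = n - 1" using v by simp
  then have "m - 1 \<le> card ({1..n} - {v})" using mn by simp
  then obtain D where D: "D \<subseteq> {1..n} - {v}" "card D = m - 1" "finite D"
    by (rule obtain_subset_with_card_n)
  have "v \<notin> D" using D by blast
  then have "card (insert v D) = m" using D m1 by simp
  moreover have "insert v D \<subseteq> {1..n}" using D v by blast
  ultimately have "insert v D \<in> Cs n m v" unfolding Cs_def by simp
  then show ?thesis by (rule that)
qed

lemma Conn_finite: "finite (Conn m)"
proof -
  have "Conn m \<subseteq> Pow (pairs m)" unfolding Conn_def by blast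
  then show ?thesis by (rule finite_subset) (simp add: pairs_finite)
qed

lemma Cs_finite: "finite (Cs n m v)"
proof -
  have "Cs n m v \<subseteq> Pow {1..n}" unfolding Cs_def by blast
  then show ?thesis by (rule finite_subset) simp
qed

lemma Out_finite: "finite (Out n C)"
proof -
  have "Out n C \<subseteq> Pow (pairs n)" unfolding Out_def by blast
  then show ?thesis by (rule finite_subset) (simp add: pairs_finite)
qed

lemma wt_build:
  assumes p: "0 < p" "p < 1" and C: "C \<in> Cs n m v" and H: "H \<in> Conn m" and F: "F \<in> Out n C"
  shows "wt n p (pull C H \<union> F) = (p / (1 - p)) ^ card H * wt n p F"
proof -
  let ?N = "card (pairs n)" and ?h = "card H" and ?f = "card F"
  have c: "card (pull C H \<union> F) = ?h + ?f" by (rule build_props(4)[OF C H F])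
  have "card (pull C H \<union> F) \<le> ?N" by (rule card_mono[OF pairs_finite build_props(1)[OF C H F]])
  then have le: "?h + ?f \<le> ?N" using c by simp
  have e: "(1 - p) ^ (?N - ?f) = (1 - p) ^ (?N - (?h + ?f)) * (1 - p) ^ ?h"
    using le by (simp add: power_add[symmetric])
  have q: "1 - p \<noteq> 0" using p by simp
  show ?thesis unfolding wt_def c e using q by (simp add: power_add power_divide field_simps)
qed

definition KK :: "nat \<Rightarrow> real \<Rightarrow> nat \<Rightarrow> nat \<Rightarrow> real" where
  "KK n p m v = (\<Sum>x\<in>(SIGMA C:Cs n m v. Out n C). wt n p (snd x))"

lemma num_Conn:
  assumes p: "0 < p" "p < 1" and v: "v \<in> {1..n}" and H: "H \<in> Conn m"
  shows "(\<Sum>E\<in>{E \<in> Pow (pairs n). card (comp E v) = m \<and> comp_relabel E v = H}. wt n p E)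
     = (p / (1 - p)) ^ card H * KK n p m v"
proof -
  let ?S = "SIGMA C:Cs n m v. Out n C"
  let ?F = "\<lambda>(C, F). pull C H \<union> F"
  have img: "{E \<in> Pow (pairs n). card (comp E v) = m \<and> comp_relabel E v = H} = ?F ` ?S"
  proof (intro equalityI subsetI)
    fix E assume "E \<in> {E \<in> Pow (pairs n). card (comp E v) = m \<and> comp_relabel E v = H}"
    then have E: "E \<subseteq> pairs n" and cm: "card (comp E v) = m" and g: "comp_relabel E v = H" by auto
    note d = decompose[OF E v cm]
    have "(comp E v, {e \<in> E. \<not> e \<subseteq> comp E v}) \<in> ?S" using d(1,2) by simp
    moreover have "E = ?F (comp E v, {e \<in> E. \<not> e \<subseteq> comp E v})" using d(3) g by simp
    ultimately show "E \<in> ?F ` ?S" by (rule rev_image_eqI)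
  next
    fix E assume "E \<in> ?F ` ?S"
    then obtain C F where C: "C \<in> Cs n m v" and F: "F \<in> Out n C" and E: "E = pull C H \<union> F" by auto
    note b = build_props[OF C H F]
    have "card C = m" using C unfolding Cs_def by simp
    then show "E \<in> {E \<in> Pow (pairs n). card (comp E v) = m \<and> comp_relabel E v = H}"
      using b E by simp
  qed
  have "(\<Sum>E\<in>{E \<in> Pow (pairs n). card (comp E v) = m \<and> comp_relabel E v = H}. wt n p E)
      = (\<Sum>x\<in>?S. wt n p (?F x))"
    unfolding img by (subst sum.reindex[OF build_inj[OF H]]) (simp only: o_def)
  also have "\<dots> = (\<Sum>x\<in>?S. (p / (1 - p)) ^ card H * wt n p (snd x))"
  proof (rule sum.cong[OF refl])
    fix x assume "x \<in> ?S"
    then obtain C F where x: "x = (C, F)" and C: "C \<in> Cs n m v" and F: "F \<in> Out n C" by auto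
    show "wt n p (?F x) = (p / (1 - p)) ^ card H * wt n p (snd x)"
      using wt_build[OF p C H F] x by simp
  qed
  also have "\<dots> = (p / (1 - p)) ^ card H * KK n p m v"
    unfolding KK_def by (simp add: sum_distrib_left)
  finally show ?thesis .
qed

lemma num_notConn:
  assumes v: "v \<in> {1..n}" and H: "H \<notin> Conn m"
  shows "{E \<in> Pow (pairs n). card (comp E v) = m \<and> comp_relabel E v = H} = {}"
  using relabel_Conn[OF _ v] H by auto

lemma den_eq:
  assumes p: "0 < p" "p < 1" and v: "v \<in> {1..n}"
  shows "(\<Sum>E\<in>{E \<in> Pow (pairs n). card (comp E v) = m}. wt n p E)
       = KK n p m v * (\<Sum>H\<in>Conn m. (p / (1 - p)) ^ card H)"
proof -
  let ?S = "{E \<in> Pow (pairs n). card (comp E v) = m}"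
  have fS: "finite ?S" using pairs_finite by simp
  have sub: "(\<lambda>E. comp_relabel E v) ` ?S \<subseteq> Conn m"
    using relabel_Conn[OF _ v] by blast
  have "(\<Sum>E\<in>?S. wt n p E) = (\<Sum>H\<in>Conn m. \<Sum>E\<in>{x \<in> ?S. comp_relabel x v = H}. wt n p E)"
    by (rule sum.group[OF fS Conn_finite sub, symmetric])
  also have "\<dots> = (\<Sum>H\<in>Conn m. (p / (1 - p)) ^ card H * KK n p m v)"
  proof (rule sum.cong[OF refl])
    fix H assume H: "H \<in> Conn m"
    have "{x \<in> ?S. comp_relabel x v = H} = {E \<in> Pow (pairs n). card (comp E v) = m \<and> comp_relabel E v = H}"
      by blast
    then show "(\<Sum>E\<in>{x \<in> ?S. comp_relabel x v = H}. wt n p E) = (p / (1 - p)) ^ card H * KK n p m v"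
      using num_Conn[OF p v H] by simp
  qed
  also have "\<dots> = KK n p m v * (\<Sum>H\<in>Conn m. (p / (1 - p)) ^ card H)"
    by (simp add: sum_distrib_left mult.commute)
  finally show ?thesis .
qed

lemma KK_pos:
  assumes p: "0 < p" "p < 1" and v: "v \<in> {1..n}" and m1: "1 \<le> m" and mn: "m \<le> n"
  shows "0 < KK n p m v"
proof -
  obtain C where C: "C \<in> Cs n m v" using Cs_ne[OF v m1 mn] by blast
  have "{} \<in> Out n C" unfolding Out_def by simp
  then have x: "(C, {}) \<in> (SIGMA C:Cs n m v. Out n C)" using C by simp
  have fin: "finite (SIGMA C:Cs n m v. Out n C)" using Cs_finite Out_finite by simp
  show ?thesis unfolding KK_def
    by (rule sum_pos2[OF fin x]) (use wt_pos[OF p] less_imp_le in auto)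
qed

lemma ne_cond:
  assumes p: "0 < p" "p < 1" and v: "v \<in> {1..n}" and m1: "1 \<le> m" and mn: "m \<le> n"
  shows "set_pmf (gnp n p) \<inter> {E. card (comp E v) = m} \<noteq> {}"
proof -
  obtain C where C: "C \<in> Cs n m v" using Cs_ne[OF v m1 mn] by blast
  have F: "{} \<in> Out n C" unfolding Out_def by simp
  note b = build_props[OF C pairs_Conn[OF m1] F]
  let ?E = "pull C (pairs m) \<union> {}"
  have "pmf (gnp n p) ?E \<noteq> 0" using pmf_gnp[OF p] b(1) wt_pos[OF p, of n ?E] by simp
  then have "?E \<in> set_pmf (gnp n p)" by (simp add: set_pmf_iff)
  moreover have "card (comp ?E v) = m" using b(2) C unfolding Cs_def by simp
  ultimately show ?thesis by blast
qed

lemma Conn_card: assumes H: "H \<in> Conn m" and m1: "1 \<le> m" shows "m - 1 \<le> card H"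
proof -
  interpret conn H m using H m1 unfolding Conn_def conn_def by simp
  have "card (dtree m H) \<le> card H" by (rule card_mono[OF finE dtree_sub])
  then show ?thesis using card_dtree by simp
qed




theorem lemma10:
  fixes p :: real and m n v :: nat and H :: "nat set set"
  assumes "0 < p" "p < 1" "1 \<le> m" "m \<le> n" "v \<in> {1..n}"
  shows "(\<Sum>T\<in>trees m. tilt_prob p m T *
            measure (binom_pointset p) {\<omega>. GX m T {x. \<omega> x} = H})
         = pmf (Gpm n p m v) H"
proof -
  have p: "0 < p" "p < 1" and m1: "1 \<le> m" and mn: "m \<le> n" and v: "v \<in> {1..n}" using assms by auto
  define r where "r = p / (1 - p)"
  define Z where "Z = (\<Sum>T\<in>trees m. tilt_weight p m T)"
  define S where "S = (\<Sum>H\<in>Conn m. r ^ card H)"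
  have r0: "r \<noteq> 0" using p unfolding r_def by simp
  have K0: "KK n p m v \<noteq> 0" using KK_pos[OF p v m1 mn] by simp
  have S_eq: "S = r ^ (m - 1) * Z"
  proof -
    have "S = (\<Sum>H\<in>Conn m. r ^ (m - 1) * r ^ (card H - (m - 1)))"
      unfolding S_def
    proof (rule sum.cong[OF refl])
      fix H assume "H \<in> Conn m"
      then have "m - 1 \<le> card H" by (rule Conn_card[OF _ m1])
      then show "r ^ card H = r ^ (m - 1) * r ^ (card H - (m - 1))"
        by (simp add: power_add[symmetric])
    qed
    also have "\<dots> = r ^ (m - 1) * (\<Sum>H\<in>Conn m. r ^ (card H - (m - 1)))"
      by (simp add: sum_distrib_left)
    also have "(\<Sum>H\<in>Conn m. r ^ (card H - (m - 1))) = Z"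
      unfolding r_def Z_def by (rule Z_eq[OF p m1])
    finally show ?thesis .
  qed
  have R: "pmf (Gpm n p m v) H =
    (\<Sum>E\<in>{E \<in> Pow (pairs n). card (comp E v) = m \<and> comp_relabel E v = H}. wt n p E) /
    (KK n p m v * S)"
    using RHS_formula[OF p ne_cond[OF p v m1 mn], of H] den_eq[OF p v, of m]
    unfolding S_def r_def by simp
  show ?thesis
  proof (cases "H \<in> Conn m")
    case True
    have L: "(\<Sum>T\<in>trees m. tilt_prob p m T * measure (binom_pointset p) {\<omega>. GX m T {x. \<omega> x} = H})
        = r ^ (card H - (m - 1)) / Z"
      unfolding r_def Z_def by (rule LHS_val[OF p m1 True])
    have "pmf (Gpm n p m v) H = r ^ card H * KK n p m v / (KK n p m v * (r ^ (m - 1) * Z))"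
      unfolding R num_Conn[OF p v True] S_eq r_def ..
    also have "\<dots> = r ^ card H / (r ^ (m - 1) * Z)" using K0 by simp
    also have "r ^ card H = r ^ (m - 1) * r ^ (card H - (m - 1))"
      using Conn_card[OF True m1] by (simp add: power_add[symmetric])
    also have "r ^ (m - 1) * r ^ (card H - (m - 1)) / (r ^ (m - 1) * Z) = r ^ (card H - (m - 1)) / Z"
      using r0 by simp
    finally show ?thesis using L by simp
  next
    case False
    have L: "(\<Sum>T\<in>trees m. tilt_prob p m T * measure (binom_pointset p) {\<omega>. GX m T {x. \<omega> x} = H}) = 0"
      by (rule LHS_zero[OF m1 False])
    have "pmf (Gpm n p m v) H = 0" unfolding R num_notConn[OF v False] by simp
    then show ?thesis using L by simp
  qed
qed



end
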